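(* Let $k_1,\dots,k_m$ and $r_1,\dots,r_n$ be positive integers. Then $L_{k_1}\times\cdots\times L_{k_m}\equiv L_{r_1}\times\cdots\times L_{r_n}$ if and only if $m=n$ and there is a permutation $\gamma$ of $\{1,\dots,m\}$ with $k_i=r_{\gamma(i)}$ for all $i$ (i.e. the two products consist of exactly the same devices).
   Context: An abstract storage device (ASD) is a pair $D=(\mathcal{S}_D,\mathcal{P}_D)$, $\mathcal{S}_D$ a finite set and $\mathcal{P}_D$ a finite family of partitions of $\mathcal{S}_D$. The kernel of a function $f$ is the partition of its domain into the nonempty fibers $f^{-1}(y)$. The binary linear device $L_n$ has state space $\{0,1\}^n$ and partition set consisting of the kernels of all $\mathbb{F}_2$-linear maps $\{0,1\}^n\to\{0,1\}$. For a partition $\pi$ of $\mathcal{S}'$ and $\phi:\mathcal{S}\to\mathcal{S}'$, $\pi\circ\phi$ is the partition of $\mathcal{S}$ with $x,y$ in the same block iff $\phi(x),\phi(y)$ are in the same block of $\pi$; $\pi\preceq\rho$ means every block of $\pi$ lies in a block of $\rho$. $D\le D'$ means there exist $\phi:\mathcal{S}_D\to\mathcal{S}_{D'}$, $\alpha:\mathcal{P}_D\to\mathcal{P}_{D'}$ with $\alpha(\pi)\circ\phi\preceq\pi$ for all $\pi\in\mathcal{P}_D$; $D\equiv D'$ means $D\le D'$ and $D'\le D$. The direct product $D\times D'$ has state space $\mathcal{S}_D\times\mathcal{S}_{D'}$ and partition set $\{\pi\times\pi':\pi\in\mathcal{P}_D,\pi'\in\mathcal{P}_{D'}\}$ with $\pi\times\pi'=\{B\times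 B':B\in\pi,B'\in\pi'\}$. *)

theory Defs
  imports Main
begin

text \<open>An abstract storage device: a pair (state set, set of partitions of the state set).\<close>
type_synonym 'a asd = "'a set \<times> 'a set set set"

definition states :: "'a asd \<Rightarrow> 'a set" where "states D = fst D"
definition parts :: "'a asd \<Rightarrow> 'a set set set" where "parts D = snd D"

definition kernel :: "'a set \<Rightarrow> ('a \<Rightarrow> 'b) \<Rightarrow> 'a set set" where
  "kernel S f = (\<lambda>y. {x \<in> S. f x = y}) ` (f ` S)"

text \<open>Binary linear device L_n: states are bit vectors of length n (bool lists),
  partitions are kernels of all F2-linear maps {0,1}^n -> {0,1}
  (additive maps; over F2 additivity is linearity, addition is pointwise xor).\<close>
definition bvec :: "nat \<Rightarrow> bool list set" where
  "bvec n = {xs. length xs = n}"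

definition f2_linear :: "nat \<Rightarrow> (bool list \<Rightarrow> bool) \<Rightarrow> bool" where
  "f2_linear n f \<longleftrightarrow> (\<forall>x\<in>bvec n. \<forall>y\<in>bvec n. f (map2 (\<noteq>) x y) = (f x \<noteq> f y))"

definition lin_dev :: "nat \<Rightarrow> bool list asd" where
  "lin_dev n = (bvec n, {kernel (bvec n) f | f. f2_linear n f})"

definition same_block :: "'b set set \<Rightarrow> 'b \<Rightarrow> 'b \<Rightarrow> bool" where
  "same_block P a b \<longleftrightarrow> (\<exists>B\<in>P. a \<in> B \<and> b \<in> B)"

definition pcomp :: "'a set \<Rightarrow> 'b set set \<Rightarrow> ('a \<Rightarrow> 'b) \<Rightarrow> 'a set set" where
  "pcomp S P \<phi> = (\<lambda>x. {y \<in> S. same_block P (\<phi> x) (\<phi> y)}) ` S"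

definition refines :: "'a set set \<Rightarrow> 'a set set \<Rightarrow> bool" where
  "refines P Q \<longleftrightarrow> (\<forall>B\<in>P. \<exists>C\<in>Q. B \<subseteq> C)"

definition dev_le :: "'a asd \<Rightarrow> 'b asd \<Rightarrow> bool" where
  "dev_le D D' \<longleftrightarrow> (\<exists>\<phi> \<alpha>. \<phi> ` states D \<subseteq> states D' \<and>
     (\<forall>P\<in>parts D. \<alpha> P \<in> parts D' \<and> refines (pcomp (states D) (\<alpha> P) \<phi>) P))"

definition dev_equiv :: "'a asd \<Rightarrow> 'b asd \<Rightarrow> bool" where
  "dev_equiv D D' \<longleftrightarrow> dev_le D D' \<and> dev_le D' D"

definition block_prod :: "'a set set list \<Rightarrow> 'a list set set" where
  "block_prod Ps = {{xs. length xs = length Ps \<and> (\<forall>i<length Ps. xs ! i \<in> Bs ! i)} | Bs.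
        length Bs = length Ps \<and> (\<forall>i<length Ps. Bs ! i \<in> Ps ! i)}"

definition prod_dev :: "'a asd list \<Rightarrow> 'a list asd" where
  "prod_dev Ds =
    ({xs. length xs = length Ds \<and> (\<forall>i<length Ds. xs ! i \<in> states (Ds ! i))},
     {block_prod Ps | Ps. length Ps = length Ds \<and> (\<forall>i<length Ds. Ps ! i \<in> parts (Ds ! i))})"

end

theory Submission
  imports Defs "HOL-Library.FuncSet" "HOL-Combinatorics.List_Permutation"
begin


definition is_part :: "'a set \<Rightarrow> 'a set set \<Rightarrow> bool" where
  "is_part S P \<longleftrightarrow> (\<forall>b\<in>P. b \<noteq> {} \<and> b \<subseteq> S) \<and> (\<forall>x\<in>S. \<exists>b\<in>P. x \<in> b)
     \<and> (\<forall>b\<in>P. \<forall>c\<in>P. b \<inter> c \<noteq> {} \<longrightarrow> b = c)"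

lemma is_partD:
  assumes "is_part S P"
  shows "\<And>b. b \<in> P \<Longrightarrow> b \<noteq> {}" "\<And>b. b \<in> P \<Longrightarrow> b \<subseteq> S"
    "\<And>x. x \<in> S \<Longrightarrow> \<exists>b\<in>P. x \<in> b"
    "\<And>b c x. b \<in> P \<Longrightarrow> c \<in> P \<Longrightarrow> x \<in> b \<Longrightarrow> x \<in> c \<Longrightarrow> b = c"
  using assms unfolding is_part_def by (blast, blast, blast, blast)

definition meetcount :: "'a set set \<Rightarrow> 'a set set \<Rightarrow> nat" where
  "meetcount P Q = card {b \<inter> c | b c. b \<in> P \<and> c \<in> Q \<and> b \<inter> c \<noteq> {}}"

definition good :: "'a asd \<Rightarrow> bool" where
  "good D \<longleftrightarrow> finite (states D) \<and> parts D \<noteq> {} \<and> (\<forall>P\<in>parts D. is_part (states D) P)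
     \<and> (\<forall>x\<in>states D. \<forall>y\<in>states D. x \<noteq> y \<longrightarrow> (\<exists>P\<in>parts D. \<not> same_block P x y))"

definition maxc :: "'a asd \<Rightarrow> nat" where
  "maxc D = Max (card ` parts D)"

definition FF :: "'a asd \<Rightarrow> 'a set set set" where
  "FF D = {P \<in> parts D. card P = maxc D}"

definition adj :: "'a set set \<Rightarrow> 'a set set \<Rightarrow> bool" where
  "adj P Q \<longleftrightarrow> meetcount P Q = 2 * card P"

definition invar :: "'a asd \<Rightarrow> 'a set set \<Rightarrow> nat \<Rightarrow> nat" where
  "invar D v s = card {u \<in> FF D. adj v u \<and> card {w \<in> FF D. adj v w \<and> adj u w} = s}"

lemma good_finite_parts:
  assumes "good D" shows "finite (parts D)" "\<And>P. P \<in> parts D \<Longrightarrow> finite P"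
proof -
  have gp: "\<And>P. P \<in> parts D \<Longrightarrow> is_part (states D) P" using assms unfolding good_def by blast
  have "parts D \<subseteq> Pow (Pow (states D))" using is_partD(2)[OF gp] by blast
  moreover have "finite (Pow (Pow (states D)))" using assms unfolding good_def by simp
  ultimately show "finite (parts D)" by (rule finite_subset)
  fix P assume "P \<in> parts D"
  hence "P \<subseteq> Pow (states D)" using is_partD(2)[OF gp] by blast
  moreover have "finite (Pow (states D))" using assms unfolding good_def by simp
  ultimately show "finite P" by (rule finite_subset)
qed

lemma is_part_sb:
  assumes "is_part S P" "x \<in> S" shows "\<exists>c\<in>P. x \<in> c \<and> (\<forall>y. same_block P x y \<longleftrightarrow> y \<in> c)"
proof -
  obtain c where c: "c \<in> P" "x \<in> c" using is_partD(3)[OF assms] by blast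
  have "same_block P x y \<longleftrightarrow> y \<in> c" for y
    using c is_partD(4)[OF assms(1)] unfolding same_block_def by blast
  thus ?thesis using c by blast
qed

lemma refine_card_le:
  assumes R: "Defs.refines R P" "\<forall>b\<in>R. b \<noteq> {}" "\<forall>x\<in>S. \<exists>b\<in>R. x \<in> b" and P: "is_part S P"
    and fin: "finite R"
  shows "card P \<le> card R"
proof -
  define g where "g r = (SOME C. C \<in> P \<and> r \<subseteq> C)" for r
  have g: "g r \<in> P \<and> r \<subseteq> g r" if "r \<in> R" for r
    using R(1) that unfolding Defs.refines_def g_def by (metis (no_types, lifting) someI_ex)
  have "P \<subseteq> g ` R"
  proof
    fix C assume C: "C \<in> P"
    then obtain x where x: "x \<in> C" "x \<in> S" using is_partD(1,2)[OF P C] by blast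
    then obtain r where r: "r \<in> R" "x \<in> r" using R(3) by blast
    have "g r = C" using is_partD(4)[OF P, of "g r" C x] g[OF r(1)] r(2) x(1) C by blast
    thus "C \<in> g ` R" using r by blast
  qed
  hence "card P \<le> card (g ` R)" using fin by (intro card_mono) auto
  also have "\<dots> \<le> card R" using fin by (rule card_image_le)
  finally show ?thesis .
qed

lemma refine_eq:
  assumes R: "Defs.refines R P" "\<forall>b\<in>R. b \<noteq> {}" "\<forall>x\<in>S. \<exists>b\<in>R. x \<in> b" "\<forall>b\<in>R. b \<subseteq> S"
    and P: "is_part S P" and fin: "finite R" and le: "card R \<le> card P"
  shows "R = P"
proof -
  define g where "g r = (SOME C. C \<in> P \<and> r \<subseteq> C)" for r
  have g: "g r \<in> P \<and> r \<subseteq> g r" if "r \<in> R" for r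
    using R(1) that unfolding Defs.refines_def g_def by (metis (no_types, lifting) someI_ex)
  have sub: "P \<subseteq> g ` R"
  proof
    fix C assume C: "C \<in> P"
    then obtain x where x: "x \<in> C" "x \<in> S" using is_partD(1,2)[OF P C] by blast
    then obtain r where r: "r \<in> R" "x \<in> r" using R(3) by blast
    have "g r = C" using is_partD(4)[OF P, of "g r" C x] g[OF r(1)] r(2) x(1) C by blast
    thus "C \<in> g ` R" using r by blast
  qed
  have gP: "g ` R \<subseteq> P" using g by blast
  hence eqP: "g ` R = P" using sub by blast
  have finP: "finite P" using fin eqP by blast
  have "card (g ` R) = card R" using eqP le card_image_le[OF fin, of g] by simp
  hence inj: "inj_on g R" using fin by (simp add: eq_card_imp_inj_on)
  have rg: "r = g r" if r: "r \<in> R" for r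
  proof
    show "r \<subseteq> g r" using g r by blast
    show "g r \<subseteq> r"
    proof
      fix y assume y: "y \<in> g r"
      hence "y \<in> S" using g[OF r] is_partD(2)[OF P] by blast
      then obtain r' where r': "r' \<in> R" "y \<in> r'" using R(3) by blast
      have "g r' = g r" using is_partD(4)[OF P, of "g r'" "g r" y] g[OF r'(1)] g[OF r] r'(2) y by blast
      hence "r' = r" using inj r r' inj_on_def by metis
      thus "y \<in> r" using r' by simp
    qed
  qed
  have "g ` R = R"
  proof -
    have "g ` R = (\<lambda>r. r) ` R" by (rule image_cong) (use rg in auto)
    thus ?thesis by simp
  qed
  thus ?thesis using eqP by simp
qed

definition pre :: "('a \<Rightarrow> 'b) \<Rightarrow> 'a set \<Rightarrow> 'b set \<Rightarrow> 'a set" where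
  "pre \<phi> S c = {y \<in> S. \<phi> y \<in> c}"

lemma pre_inj:
  assumes "bij_betw \<phi> S S'" shows "inj_on (pre \<phi> S) (Pow S')"
proof
  fix c d assume c: "c \<in> Pow S'" and d: "d \<in> Pow S'" and e: "pre \<phi> S c = pre \<phi> S d"
  have "c = \<phi> ` pre \<phi> S c" if "c \<subseteq> S'" for c
    using that assms unfolding pre_def bij_betw_def by blast
  thus "c = d" using c d e by (metis PowD)
qed

lemma pre_empty:
  assumes "bij_betw \<phi> S S'" "c \<subseteq> S'" shows "pre \<phi> S c = {} \<longleftrightarrow> c = {}"
  using assms unfolding pre_def bij_betw_def by blast

lemma card_pre:
  assumes "bij_betw \<phi> S S'" "Q \<subseteq> Pow S'" shows "card (pre \<phi> S ` Q) = card Q"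
  using card_image[OF inj_on_subset[OF pre_inj[OF assms(1)] assms(2)]] .

lemma meetcount_pre:
  assumes "bij_betw \<phi> S S'" "Q \<subseteq> Pow S'" "Q2 \<subseteq> Pow S'"
  shows "meetcount (pre \<phi> S ` Q) (pre \<phi> S ` Q2) = meetcount Q Q2"
proof -
  let ?M = "{b \<inter> c | b c. b \<in> Q \<and> c \<in> Q2 \<and> b \<inter> c \<noteq> {}}"
  have int: "pre \<phi> S b \<inter> pre \<phi> S c = pre \<phi> S (b \<inter> c)" for b c unfolding pre_def by blast
  have "{b \<inter> c | b c. b \<in> pre \<phi> S ` Q \<and> c \<in> pre \<phi> S ` Q2 \<and> b \<inter> c \<noteq> {}} = pre \<phi> S ` ?M"
  proof (rule set_eqI, rule iffI)
    fix x assume "x \<in> {b \<inter> c | b c. b \<in> pre \<phi> S ` Q \<and> c \<in> pre \<phi> S ` Q2 \<and> b \<inter> c \<noteq> {}}"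
    then obtain b c where bc: "b \<in> Q" "c \<in> Q2" "x = pre \<phi> S b \<inter> pre \<phi> S c" "x \<noteq> {}" by blast
    hence x1: "x = pre \<phi> S (b \<inter> c)" using int by auto
    hence "b \<inter> c \<noteq> {}" using bc(4) unfolding pre_def by auto
    note x1 this
    thus "x \<in> pre \<phi> S ` ?M" using bc by blast
  next
    fix x assume "x \<in> pre \<phi> S ` ?M"
    then obtain b c where bc: "b \<in> Q" "c \<in> Q2" "x = pre \<phi> S (b \<inter> c)" "b \<inter> c \<noteq> {}" by blast
    have "b \<inter> c \<subseteq> S'" using bc assms(2) by blast
    hence ne: "x \<noteq> {}" using pre_empty[OF assms(1)] bc(3,4) by simp
    have xe: "x = pre \<phi> S b \<inter> pre \<phi> S c" using bc(3) int by simp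
    have "pre \<phi> S b \<in> pre \<phi> S ` Q" "pre \<phi> S c \<in> pre \<phi> S ` Q2" using bc(1,2) by auto
    thus "x \<in> {b \<inter> c | b c. b \<in> pre \<phi> S ` Q \<and> c \<in> pre \<phi> S ` Q2 \<and> b \<inter> c \<noteq> {}}"
      using ne xe by blast
  qed
  moreover have "?M \<subseteq> Pow S'" using assms(2) by blast
  ultimately show ?thesis unfolding meetcount_def using card_pre[OF assms(1)] by simp
qed

lemma pcomp_pre:
  assumes Q: "is_part S' Q" and bij: "bij_betw \<phi> S S'"
  shows "pcomp S Q \<phi> = pre \<phi> S ` Q"
proof (rule set_eqI, rule iffI)
  fix B assume "B \<in> pcomp S Q \<phi>"
  then obtain x where x: "x \<in> S" "B = {y \<in> S. same_block Q (\<phi> x) (\<phi> y)}" unfolding pcomp_def by blast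
  have "\<phi> x \<in> S'" using x bij unfolding bij_betw_def by blast
  then obtain c where c: "c \<in> Q" "\<forall>y. same_block Q (\<phi> x) y \<longleftrightarrow> y \<in> c" using is_part_sb[OF Q] by blast
  have "B = pre \<phi> S c" using x c unfolding pre_def by auto
  thus "B \<in> pre \<phi> S ` Q" using c by blast
next
  fix B assume "B \<in> pre \<phi> S ` Q"
  then obtain c where c: "c \<in> Q" "B = pre \<phi> S c" by blast
  obtain z where z: "z \<in> c" using is_partD(1)[OF Q c(1)] by blast
  have "z \<in> S'" using z is_partD(2)[OF Q c(1)] by blast
  then obtain x where x: "x \<in> S" "\<phi> x = z" using bij unfolding bij_betw_def by blast
  have "same_block Q (\<phi> x) y \<longleftrightarrow> y \<in> c" for y
    using is_partD(4)[OF Q c(1)] z x c(1) unfolding same_block_def by blast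
  hence "B = {y \<in> S. same_block Q (\<phi> x) (\<phi> y)}" using c unfolding pre_def by auto
  thus "B \<in> pcomp S Q \<phi>" using x unfolding pcomp_def by blast
qed


lemma good_parts:
  assumes "good D" "P \<in> parts D" shows "is_part (states D) P"
  using assms unfolding good_def by blast

lemma good_sep:
  assumes "good D" "x \<in> states D" "y \<in> states D" "x \<noteq> y"
  shows "\<exists>P\<in>parts D. \<not> same_block P x y"
  using assms unfolding good_def by blast

lemma witness_inj:
  assumes gD: "good D" and gD': "good D'"
    and phi: "\<phi> ` states D \<subseteq> states D'"
    and al: "\<forall>P\<in>parts D. \<alpha> P \<in> parts D' \<and> Defs.refines (pcomp (states D) (\<alpha> P) \<phi>) P"
  shows "inj_on \<phi> (states D)"
proof
  fix x y assume x: "x \<in> states D" and y: "y \<in> states D" and e: "\<phi> x = \<phi> y"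
  show "x = y"
  proof (rule ccontr)
    assume "x \<noteq> y"
    then obtain P where P: "P \<in> parts D" "\<not> same_block P x y" using good_sep[OF gD x y] by blast
    have Q: "is_part (states D') (\<alpha> P)" using al P(1) good_parts[OF gD'] by blast
    have px: "\<phi> x \<in> states D'" using phi x by blast
    obtain c where c: "c \<in> \<alpha> P" "\<phi> x \<in> c" "\<forall>z. same_block (\<alpha> P) (\<phi> x) z \<longleftrightarrow> z \<in> c"
      using is_part_sb[OF Q px] by blast
    let ?B = "{z \<in> states D. same_block (\<alpha> P) (\<phi> x) (\<phi> z)}"
    have B: "?B \<in> pcomp (states D) (\<alpha> P) \<phi>" using x unfolding pcomp_def by blast
    have xy: "x \<in> ?B" "y \<in> ?B" using c e x y by auto
    obtain C where "C \<in> P" "?B \<subseteq> C" using al P(1) B unfolding Defs.refines_def by blast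
    hence "same_block P x y" using xy unfolding same_block_def by blast
    thus False using P(2) by blast
  qed
qed

lemma pcomp_basic:
  assumes Q: "is_part S' Q" and phi: "\<phi> ` S \<subseteq> S'"
  shows "\<forall>b\<in>pcomp S Q \<phi>. b \<noteq> {} \<and> b \<subseteq> S" "\<forall>x\<in>S. \<exists>b\<in>pcomp S Q \<phi>. x \<in> b"
    "pcomp S Q \<phi> \<subseteq> pre \<phi> S ` Q"
proof -
  have own: "x \<in> {y \<in> S. same_block Q (\<phi> x) (\<phi> y)}" if x: "x \<in> S" for x
  proof -
    have "\<phi> x \<in> S'" using x phi by blast
    then obtain c where "c \<in> Q" "\<phi> x \<in> c" using is_partD(3)[OF Q] by blast
    thus ?thesis using x unfolding same_block_def by blast
  qed
  show "\<forall>b\<in>pcomp S Q \<phi>. b \<noteq> {} \<and> b \<subseteq> S" unfolding pcomp_def using own by blast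
  show "\<forall>x\<in>S. \<exists>b\<in>pcomp S Q \<phi>. x \<in> b" unfolding pcomp_def using own by blast
  show "pcomp S Q \<phi> \<subseteq> pre \<phi> S ` Q"
  proof
    fix B assume "B \<in> pcomp S Q \<phi>"
    then obtain x where x: "x \<in> S" "B = {y \<in> S. same_block Q (\<phi> x) (\<phi> y)}" unfolding pcomp_def by blast
    have "\<phi> x \<in> S'" using x phi by blast
    then obtain c where c: "c \<in> Q" "\<forall>y. same_block Q (\<phi> x) y \<longleftrightarrow> y \<in> c" using is_part_sb[OF Q] by blast
    have "B = pre \<phi> S c" using x c unfolding pre_def by auto
    thus "B \<in> pre \<phi> S ` Q" using c by blast
  qed
qed

lemma le_facts:
  assumes gD: "good D" and gD': "good D'" and le: "dev_le D D'"
  shows "card (states D) \<le> card (states D')" "maxc D \<le> maxc D'"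
proof -
  obtain \<phi> \<alpha> where phi: "\<phi> ` states D \<subseteq> states D'"
    and al: "\<forall>P\<in>parts D. \<alpha> P \<in> parts D' \<and> Defs.refines (pcomp (states D) (\<alpha> P) \<phi>) P"
    using le unfolding dev_le_def by blast
  have inj: "inj_on \<phi> (states D)" using witness_inj[OF gD gD' phi al] .
  have finS': "finite (states D')" using gD' unfolding good_def by blast
  show c: "card (states D) \<le> card (states D')" using card_inj_on_le[OF inj phi finS'] .
  show "maxc D \<le> maxc D'"
  proof -
    have fin': "finite (card ` parts D')" using good_finite_parts(1)[OF gD'] by simp
    have ne: "parts D \<noteq> {}" using gD unfolding good_def by blast
    have "card P \<le> maxc D'" if P: "P \<in> parts D" for P
    proof -
      let ?R = "pcomp (states D) (\<alpha> P) \<phi>"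
      have Q: "is_part (states D') (\<alpha> P)" using al P good_parts[OF gD'] by blast
      have fQ: "finite (\<alpha> P)" using good_finite_parts(2)[OF gD'] al P by blast
      note pb = pcomp_basic[OF Q phi]
      have "card ?R \<le> card (pre \<phi> (states D) ` \<alpha> P)" using pb(3) fQ by (intro card_mono) auto
      also have "\<dots> \<le> card (\<alpha> P)" using fQ by (rule card_image_le)
      finally have R: "card ?R \<le> card (\<alpha> P)" .
      have finR: "finite ?R" using pb(3) fQ finite_subset by blast
      have "card P \<le> card ?R"
        by (rule refine_card_le[of ?R P "states D"]) (use al P pb good_parts[OF gD P] finR in auto)
      also note R
      also have "card (\<alpha> P) \<le> maxc D'" unfolding maxc_def using fin' al P by auto
      finally show ?thesis .
    qed
    thus ?thesis unfolding maxc_def using ne good_finite_parts(1)[OF gD] by (subst Max_le_iff) auto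
  qed
qed


lemma one_dir:
  assumes gD: "good D" and gD': "good D'" and le: "dev_le D D'"
    and cS: "card (states D') \<le> card (states D)" and cM: "maxc D' \<le> maxc D"
  shows "\<exists>\<phi> \<alpha>. bij_betw \<phi> (states D) (states D') \<and>
           (\<forall>P\<in>FF D. \<alpha> P \<in> FF D' \<and> P = pre \<phi> (states D) ` \<alpha> P)"
proof -
  obtain \<phi> \<alpha> where phi: "\<phi> ` states D \<subseteq> states D'"
    and al: "\<forall>P\<in>parts D. \<alpha> P \<in> parts D' \<and> Defs.refines (pcomp (states D) (\<alpha> P) \<phi>) P"
    using le unfolding dev_le_def by blast
  have inj: "inj_on \<phi> (states D)" using witness_inj[OF gD gD' phi al] .
  have finS': "finite (states D')" using gD' unfolding good_def by blast
  have "card (\<phi> ` states D) = card (states D')" using card_image[OF inj] cS card_mono[OF finS' phi] by simp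
  hence "\<phi> ` states D = states D'" using card_subset_eq[OF finS' phi] by blast
  hence bij: "bij_betw \<phi> (states D) (states D')" using inj unfolding bij_betw_def by blast
  have "\<alpha> P \<in> FF D' \<and> P = pre \<phi> (states D) ` \<alpha> P" if P: "P \<in> FF D" for P
  proof -
    have P1: "P \<in> parts D" "card P = maxc D" using P unfolding FF_def by auto
    have fin': "finite (card ` parts D')" using good_finite_parts(1)[OF gD'] by simp
    let ?R = "pcomp (states D) (\<alpha> P) \<phi>"
    have Q: "is_part (states D') (\<alpha> P)" using al P1 good_parts[OF gD'] by blast
    have QP: "\<alpha> P \<subseteq> Pow (states D')" using is_partD(2)[OF Q] by blast
    have fQ: "finite (\<alpha> P)" using good_finite_parts(2)[OF gD'] al P1 by blast
    note pb = pcomp_basic[OF Q phi]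
    have Req: "?R = pre \<phi> (states D) ` \<alpha> P" using pcomp_pre[OF Q bij] .
    have cR: "card ?R = card (\<alpha> P)" unfolding Req using card_pre[OF bij QP] .
    have finR: "finite ?R" using pb(3) fQ finite_subset by blast
    have "card (\<alpha> P) \<le> maxc D'" unfolding maxc_def using fin' al P1 by auto
    hence "card ?R \<le> card P" using cR cM P1 by simp
    hence "?R = P"
      by (intro refine_eq[of ?R P "states D"]) (use al P1 pb good_parts[OF gD P1(1)] finR in auto)
    moreover have "card P \<le> card ?R" 
      by (rule refine_card_le[of ?R P "states D"]) (use al P1 pb good_parts[OF gD P1(1)] finR in auto)
    ultimately have "card (\<alpha> P) = maxc D'" using cR cM P1 \<open>card (\<alpha> P) \<le> maxc D'\<close> by simp
    hence "\<alpha> P \<in> FF D'" using al P1 unfolding FF_def by blast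
    thus ?thesis using \<open>?R = P\<close> Req by simp
  qed
  thus ?thesis using bij by blast
qed

lemma FF_sub: "FF D \<subseteq> parts D" unfolding FF_def by blast

lemma FF_finite: "good D \<Longrightarrow> finite (FF D)"
  using good_finite_parts(1) FF_sub finite_subset by blast

lemma generic:
  assumes gD: "good D" and gD': "good D'" and eq: "dev_equiv D D'"
  shows "maxc D = maxc D' \<and> (\<forall>v\<in>FF D. \<exists>v'\<in>FF D'. \<forall>s. invar D v s = invar D' v' s)"
proof -
  have le1: "dev_le D D'" and le2: "dev_le D' D" using eq unfolding dev_equiv_def by auto
  note f1 = le_facts[OF gD gD' le1] and f2 = le_facts[OF gD' gD le2]
  obtain \<phi> \<alpha> where bij: "bij_betw \<phi> (states D) (states D')"
    and al: "\<forall>P\<in>FF D. \<alpha> P \<in> FF D' \<and> P = pre \<phi> (states D) ` \<alpha> P"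
    using one_dir[OF gD gD' le1 f2(1) f2(2)] by blast
  obtain \<psi> \<beta> where bij2: "bij_betw \<psi> (states D') (states D)"
    and be: "\<forall>P\<in>FF D'. \<beta> P \<in> FF D \<and> P = pre \<psi> (states D') ` \<beta> P"
    using one_dir[OF gD' gD le2 f1(1) f1(2)] by blast
  have injA: "inj_on \<alpha> (FF D)" using al by (metis inj_onI)
  have injB: "inj_on \<beta> (FF D')" using be by (metis inj_onI)
  have c1: "card (FF D) \<le> card (FF D')"
    using card_inj_on_le[OF injA _ FF_finite[OF gD']] al by blast
  have c2: "card (FF D') \<le> card (FF D)"
    using card_inj_on_le[OF injB _ FF_finite[OF gD]] be by blast
  have im: "\<alpha> ` FF D = FF D'"
    using card_subset_eq[OF FF_finite[OF gD']] al card_image[OF injA] c2 by (metis antisym c1 image_subsetI)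
  have subP: "Q \<subseteq> Pow (states D')" if "Q \<in> FF D'" for Q
    using is_partD(2)[OF good_parts[OF gD' FF_sub[THEN subsetD, OF that]]] by blast
  have cardA: "card (\<alpha> P) = card P" if "P \<in> FF D" for P
    using al that card_pre[OF bij subP] by metis
  have adjA: "adj (\<alpha> P) (\<alpha> Q) \<longleftrightarrow> adj P Q" if "P \<in> FF D" "Q \<in> FF D" for P Q
  proof -
    have "meetcount P Q = meetcount (\<alpha> P) (\<alpha> Q)"
      using al that meetcount_pre[OF bij subP subP] by metis
    thus ?thesis unfolding adj_def using cardA that by simp
  qed
  have gen: "{u \<in> FF D'. A u} = \<alpha> ` {u \<in> FF D. A (\<alpha> u)}" for A
    unfolding im[symmetric] by blast
  have "\<forall>s. invar D v s = invar D' (\<alpha> v) s" if v: "v \<in> FF D" for v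
  proof
    fix s
    have inner: "card {w \<in> FF D'. adj (\<alpha> v) w \<and> adj (\<alpha> u) w} = card {w \<in> FF D. adj v w \<and> adj u w}"
      if u: "u \<in> FF D" for u
    proof -
      have "{w \<in> FF D'. adj (\<alpha> v) w \<and> adj (\<alpha> u) w} = \<alpha> ` {w \<in> FF D. adj v w \<and> adj u w}"
        using gen[of "\<lambda>w. adj (\<alpha> v) w \<and> adj (\<alpha> u) w"] adjA v u by auto
      thus ?thesis using card_image[OF inj_on_subset[OF injA]] by (metis (no_types, lifting) mem_Collect_eq subsetI)
    qed
    have "{u \<in> FF D. adj (\<alpha> v) (\<alpha> u) \<and> card {w \<in> FF D'. adj (\<alpha> v) w \<and> adj (\<alpha> u) w} = s}
       = {u \<in> FF D. adj v u \<and> card {w \<in> FF D. adj v w \<and> adj u w} = s}"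
      using adjA v inner by auto
    hence "{u \<in> FF D'. adj (\<alpha> v) u \<and> card {w \<in> FF D'. adj (\<alpha> v) w \<and> adj u w} = s}
       = \<alpha> ` {u \<in> FF D. adj v u \<and> card {w \<in> FF D. adj v w \<and> adj u w} = s}"
      using gen[of "\<lambda>u. adj (\<alpha> v) u \<and> card {w \<in> FF D'. adj (\<alpha> v) w \<and> adj u w} = s"] by simp
    thus "invar D v s = invar D' (\<alpha> v) s" unfolding invar_def
      using card_image[OF inj_on_subset[OF injA]] by (metis (no_types, lifting) mem_Collect_eq subsetI)
  qed
  moreover have "maxc D = maxc D'" using f1 f2 by simp
  ultimately show ?thesis using al by blast
qed


fun dot :: "bool list \<Rightarrow> bool list \<Rightarrow> bool" where
  "dot (a#as) (x#xs) = ((a \<and> x) \<noteq> dot as xs)"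
| "dot _ _ = False"

definition unit :: "nat \<Rightarrow> nat \<Rightarrow> bool list" where
  "unit n j = (replicate n False)[j := True]"

lemma dot_xor: "length x = length a \<Longrightarrow> length y = length a \<Longrightarrow>
    dot a (map2 (\<noteq>) x y) = (dot a x \<noteq> dot a y)"
proof (induction a arbitrary: x y)
  case Nil thus ?case by simp
next
  case (Cons b as)
  then obtain x0 xs y0 ys where "x = x0 # xs" "y = y0 # ys"
    by (metis length_Suc_conv)
  thus ?case using Cons by auto
qed

lemma dot_lin: "length a = n \<Longrightarrow> f2_linear n (dot a)"
  unfolding f2_linear_def bvec_def using dot_xor by auto

lemma dot_unit: "j < length a \<Longrightarrow> dot a (unit (length a) j) = a ! j"
proof (induction a arbitrary: j)
  case Nil thus ?case by simp
next
  case (Cons b as)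
  have z: "dot c (replicate (length c) False) = False" for c by (induction c) auto
  show ?case
  proof (cases j)
    case 0 thus ?thesis using z by (simp add: unit_def)
  next
    case (Suc i) thus ?thesis using Cons by (simp add: unit_def)
  qed
qed

lemma dot_zero: "dot a (replicate n False) = False"
proof (induction a arbitrary: n)
  case Nil thus ?case by simp
next
  case (Cons b as) thus ?case by (cases n) auto
qed

lemma dot_zero2: "dot (replicate n False) x = False"
proof (induction n arbitrary: x)
  case 0 thus ?case by simp
next
  case (Suc n) thus ?case by (cases x) auto
qed

lemma lin_zero: assumes "f2_linear n f" shows "f (replicate n False) = False"
proof -
  have z: "replicate n False \<in> bvec n" unfolding bvec_def by simp
  have "map2 (\<noteq>) (replicate n False) (replicate n False) = replicate n False"
    by (induction n) auto
  moreover have "f (map2 (\<noteq>) (replicate n False) (replicate n False)) = (f (replicate n False) \<noteq> f (replicate n False))"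
    using assms z unfolding f2_linear_def by blast
  ultimately show ?thesis by simp
qed

lemma unit_bvec: "unit n j \<in> bvec n" unfolding unit_def bvec_def by simp

lemma lin_eq_aux:
  assumes f: "f2_linear n f" and g: "f2_linear n g"
    and u: "\<forall>j<n. f (unit n j) = g (unit n j)"
  shows "\<forall>x\<in>bvec n. card {j. j < n \<and> x ! j} = c \<longrightarrow> f x = g x"
proof (induction c)
  case 0
  show ?case
  proof (intro ballI impI)
    fix x assume x: "x \<in> bvec n" and c: "card {j. j < n \<and> x ! j} = 0"
    have "{j. j < n \<and> x ! j} = {}" using c by simp
    hence "x = replicate n False" using x unfolding bvec_def
      by (intro nth_equalityI) auto
    thus "f x = g x" using lin_zero[OF f] lin_zero[OF g] by simp
  qed
next
  case (Suc c)
  show ?case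
  proof (intro ballI impI)
    fix x assume x: "x \<in> bvec n" and c: "card {j. j < n \<and> x ! j} = Suc c"
    hence "{j. j < n \<and> x ! j} \<noteq> {}" by (metis card.empty Zero_not_Suc)
    then obtain j where j: "j < n" "x ! j" by blast
    let ?x' = "x[j := False]"
    have lx: "length x = n" using x unfolding bvec_def by simp
    have x'b: "?x' \<in> bvec n" using lx unfolding bvec_def by simp
    have nx: "?x' ! i = (x ! i \<and> i \<noteq> j)" if "i < n" for i using lx that j(1) by (auto simp add: nth_list_update)
    have "{i. i < n \<and> ?x' ! i} = {i. i < n \<and> x ! i} - {j}" using nx by auto
    hence "card {i. i < n \<and> ?x' ! i} = c" using c j by simp
    hence e': "f ?x' = g ?x'" using Suc.IH x'b by blast
    have xe: "x = map2 (\<noteq>) ?x' (unit n j)"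
      using lx j by (intro nth_equalityI) (auto simp: unit_def nth_list_update)
    have "f (map2 (\<noteq>) ?x' (unit n j)) = (f ?x' \<noteq> f (unit n j))"
      using f x'b unit_bvec[of n j] unfolding f2_linear_def by blast
    hence "f x = (f ?x' \<noteq> f (unit n j))" using xe by simp
    moreover have "g (map2 (\<noteq>) ?x' (unit n j)) = (g ?x' \<noteq> g (unit n j))"
      using g x'b unit_bvec[of n j] unfolding f2_linear_def by blast
    hence "g x = (g ?x' \<noteq> g (unit n j))" using xe by simp
    ultimately show "f x = g x" using e' u j by simp
  qed
qed

lemma lin_eq:
  assumes "f2_linear n f" "f2_linear n g" "\<forall>j<n. f (unit n j) = g (unit n j)" "x \<in> bvec n"
  shows "f x = g x"
  using lin_eq_aux[OF assms(1-3)] assms(4) by blast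

definition coef :: "nat \<Rightarrow> (bool list \<Rightarrow> bool) \<Rightarrow> bool list" where
  "coef n f = map (\<lambda>j. f (unit n j)) [0..<n]"

lemma lin_dot:
  assumes "f2_linear n f" "x \<in> bvec n"
  shows "f x = dot (coef n f) x" "coef n f \<in> bvec n"
proof -
  have l: "length (coef n f) = n" unfolding coef_def by simp
  thus "coef n f \<in> bvec n" unfolding bvec_def by simp
  show "f x = dot (coef n f) x"
  proof (rule lin_eq[OF assms(1) dot_lin[OF l] _ assms(2)], intro allI impI)
    fix j assume "j < n"
    thus "f (unit n j) = dot (coef n f) (unit n j)"
      using dot_unit[of j "coef n f"] l by (simp add: coef_def)
  qed
qed

lemma bvec_ne: "replicate n False \<in> bvec n" unfolding bvec_def by simp

lemma dot_image:
  assumes "a \<in> bvec n"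
  shows "dot a ` bvec n = (if True \<in> set a then UNIV else {False})"
proof (cases "True \<in> set a")
  case True
  then obtain j where j: "j < length a" "a ! j" by (auto simp: in_set_conv_nth)
  have l: "length a = n" using assms unfolding bvec_def by simp
  have T: "True \<in> dot a ` bvec n" using dot_unit[OF j(1)] j(2) l
    by (intro image_eqI[where x="unit n j"]) (simp_all add: unit_bvec)
  have F: "False \<in> dot a ` bvec n"
    by (intro image_eqI[where x="replicate n False"]) (simp_all add: dot_zero bvec_ne)
  have "dot a ` bvec n = UNIV"
  proof (rule set_eqI)
    fix b show "b \<in> dot a ` bvec n \<longleftrightarrow> b \<in> UNIV" using T F by (cases b) simp_all
  qed
  thus ?thesis using True by simp
next
  case False
  have l: "length a = n" using assms unfolding bvec_def by simp
  have "\<forall>i<length a. \<not> a ! i"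
  proof (intro allI impI)
    fix i assume "i < length a" hence "a ! i \<in> set a" by (rule nth_mem)
    thus "\<not> a ! i" using False by (cases "a ! i") auto
  qed
  hence "a = replicate n False" using l by (intro nth_equalityI) auto
  hence z: "dot a x = False" for x using dot_zero2 by simp
  have "dot a ` bvec n = {False}"
  proof (rule set_eqI, rule iffI)
    fix b assume "b \<in> dot a ` bvec n" thus "b \<in> {False}" using z by auto
  next
    fix b assume "b \<in> {False}" thus "b \<in> dot a ` bvec n" using z bvec_ne
      by (intro image_eqI[where x="replicate n False"]) auto
  qed
  thus ?thesis using False by simp
qed

lemma dot_pair_image:
  assumes a: "a \<in> bvec n" and b: "b \<in> bvec n" and ta: "True \<in> set a" and tb: "True \<in> set b"
    and ne: "a \<noteq> b"
  shows "(\<lambda>y. (dot a y, dot b y)) ` bvec n = UNIV"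
proof -
  let ?I = "(\<lambda>y. (dot a y, dot b y)) ` bvec n"
  have la: "length a = n" and lb: "length b = n" using a b unfolding bvec_def by auto
  have cl: "(p \<noteq> q, r \<noteq> s) \<in> ?I" if h1: "(p, r) \<in> ?I" and h2: "(q, s) \<in> ?I" for p q r s
  proof -
    obtain y where y: "y \<in> bvec n" "(p, r) = (dot a y, dot b y)" using h1 by blast
    obtain z where z: "z \<in> bvec n" "(q, s) = (dot a z, dot b z)" using h2 by blast
    have ly: "length y = length a" "length z = length a" "length y = length b" "length z = length b"
      using y z la lb unfolding bvec_def by auto
    have "map2 (\<noteq>) y z \<in> bvec n" using y z unfolding bvec_def by simp
    moreover have "(p \<noteq> q, r \<noteq> s) = (dot a (map2 (\<noteq>) y z), dot b (map2 (\<noteq>) y z))"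
      using dot_xor[OF ly(1,2)] dot_xor[OF ly(3,4)] y z by simp
    ultimately show ?thesis by blast
  qed
  obtain j1 where j1: "j1 < n" "a ! j1" using ta la by (auto simp: in_set_conv_nth)
  obtain j2 where j2: "j2 < n" "b ! j2" using tb lb by (auto simp: in_set_conv_nth)
  have "\<exists>j<n. a ! j \<noteq> b ! j"
  proof (rule ccontr)
    assume "\<not> (\<exists>j<n. a ! j \<noteq> b ! j)"
    hence "a = b" using la lb by (intro nth_equalityI) auto
    thus False using ne by simp
  qed
  then obtain j3 where j3: "j3 < n" "a ! j3 \<noteq> b ! j3" by blast
  have u: "(a ! j, b ! j) \<in> ?I" if "j < n" for j
  proof -
    have "dot a (unit n j) = a ! j" "dot b (unit n j) = b ! j"
      using dot_unit[of j a] dot_unit[of j b] la lb that by auto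
    thus ?thesis by (intro image_eqI[where x="unit n j"]) (simp_all add: unit_bvec)
  qed
  have p1: "(True, b ! j1) \<in> ?I" using u[OF j1(1)] j1(2) by simp
  have p2: "(a ! j2, True) \<in> ?I" using u[OF j2(1)] j2(2) by simp
  have p3: "(a ! j3, b ! j3) \<in> ?I" using u[OF j3(1)] .
  have tf_ft: "(True, False) \<in> ?I \<and> (False, True) \<in> ?I"
  proof (cases "a ! j3")
    case True
    hence tf: "(True, False) \<in> ?I" using p3 j3(2) by simp
    show ?thesis
    proof (cases "a ! j2")
      case True thus ?thesis using cl[OF p2 tf] tf by simp
    next
      case False thus ?thesis using p2 tf by simp
    qed
  next
    case False
    hence ft: "(False, True) \<in> ?I" using p3 j3(2) by simp
    show ?thesis
    proof (cases "b ! j1")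
      case True thus ?thesis using cl[OF p1 ft] ft by simp
    next
      case False thus ?thesis using p1 ft by simp
    qed
  qed
  have tt: "(True, True) \<in> ?I" using cl[of True False False True] tf_ft by simp
  have ff: "(False, False) \<in> ?I"
    by (intro image_eqI[where x="replicate n False"]) (simp_all add: dot_zero bvec_ne)
  have all: "(p, q) \<in> ?I" for p q
    using tf_ft tt ff by (cases p; cases q) simp_all
  thus ?thesis by auto
qed

lemma card_bvec: "card (bvec n) = 2 ^ n" "finite (bvec n)"
proof -
  have e: "bvec n = {xs. set xs \<subseteq> (UNIV::bool set) \<and> length xs = n}" unfolding bvec_def by simp
  show "card (bvec n) = 2 ^ n" unfolding e using card_lists_length_eq[of "UNIV::bool set" n] by simp
  show "finite (bvec n)" unfolding e using finite_lists_length_eq[of "UNIV::bool set" n] by simp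
qed

lemma card_nz: "card {a \<in> bvec n. True \<in> set a} = 2 ^ n - 1"
proof -
  have e: "{a \<in> bvec n. True \<in> set a} = bvec n - {replicate n False}"
  proof (rule set_eqI, rule iffI)
    fix a assume "a \<in> {a \<in> bvec n. True \<in> set a}" thus "a \<in> bvec n - {replicate n False}" by auto
  next
    fix a assume a: "a \<in> bvec n - {replicate n False}"
    hence "length a = n" unfolding bvec_def by simp
    hence la: "length a = n" .
    show "a \<in> {a \<in> bvec n. True \<in> set a}"
    proof (rule ccontr)
      assume "a \<notin> {a \<in> bvec n. True \<in> set a}"
      hence "True \<notin> set a" using a by simp
      hence "\<forall>i<length a. \<not> a ! i" by (metis in_set_conv_nth)
      hence "a = replicate n False" using la by (intro nth_equalityI) auto
      thus False using a by simp
    qed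
  qed
  show ?thesis unfolding e using card_bvec bvec_ne by (simp add: card_Diff_singleton)
qed


lemma kernel_alt: "kernel S f = (\<lambda>z. {x \<in> S. f x = f z}) ` S"
  unfolding kernel_def by auto

lemma kernel_cong: "(\<And>x. x \<in> S \<Longrightarrow> f x = g x) \<Longrightarrow> kernel S f = kernel S g"
  unfolding kernel_alt by (intro image_cong refl) auto

lemma kernel_is_part: "is_part S (kernel S f)"
  unfolding is_part_def kernel_alt by auto

lemma card_kernel:
  assumes "finite S" shows "card (kernel S f) = card (f ` S)"
proof -
  have "inj_on (\<lambda>y. {x \<in> S. f x = y}) (f ` S)"
  proof
    fix y1 y2 assume "y1 \<in> f ` S" "y2 \<in> f ` S" and e: "{x \<in> S. f x = y1} = {x \<in> S. f x = y2}"
    then obtain x where "x \<in> S" "f x = y1" by blast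
    thus "y1 = y2" using e by blast
  qed
  thus ?thesis unfolding kernel_def by (rule card_image)
qed

lemma meet_kernel:
  assumes "finite S"
  shows "meetcount (kernel S g) (kernel S h) = card ((\<lambda>x. (g x, h x)) ` S)"
proof -
  have "{b \<inter> c | b c. b \<in> kernel S g \<and> c \<in> kernel S h \<and> b \<inter> c \<noteq> {}} = kernel S (\<lambda>x. (g x, h x))"
  proof (rule set_eqI, rule iffI)
    fix X assume "X \<in> {b \<inter> c | b c. b \<in> kernel S g \<and> c \<in> kernel S h \<and> b \<inter> c \<noteq> {}}"
    then obtain z1 z2 where z: "z1 \<in> S" "z2 \<in> S" "X = {x \<in> S. g x = g z1} \<inter> {x \<in> S. h x = h z2}" "X \<noteq> {}"
      unfolding kernel_alt by blast
    then obtain w where w: "w \<in> X" by blast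
    hence "w \<in> S" "g w = g z1" "h w = h z2" using z by auto
    hence "X = {x \<in> S. (g x, h x) = (g w, h w)}" using z by auto
    thus "X \<in> kernel S (\<lambda>x. (g x, h x))" unfolding kernel_alt using \<open>w \<in> S\<close> by blast
  next
    fix X assume "X \<in> kernel S (\<lambda>x. (g x, h x))"
    then obtain w where w: "w \<in> S" "X = {x \<in> S. (g x, h x) = (g w, h w)}" unfolding kernel_alt by blast
    have "X = {x \<in> S. g x = g w} \<inter> {x \<in> S. h x = h w}" using w by auto
    moreover have "{x \<in> S. g x = g w} \<in> kernel S g" "{x \<in> S. h x = h w} \<in> kernel S h"
      unfolding kernel_alt using w by auto
    moreover have "X \<noteq> {}" using w by auto
    ultimately show "X \<in> {b \<inter> c | b c. b \<in> kernel S g \<and> c \<in> kernel S h \<and> b \<inter> c \<noteq> {}}" by blast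
  qed
  thus ?thesis unfolding meetcount_def using card_kernel[OF assms] by simp
qed

lemma restrict_eq_iff: "restrict F I = restrict F' I \<longleftrightarrow> (\<forall>i\<in>I. F i = F' i)"
  unfolding restrict_def fun_eq_iff by auto

definition PS :: "nat list \<Rightarrow> bool list list set" where
  "PS ks = {xs. length xs = length ks \<and> (\<forall>i<length ks. xs ! i \<in> bvec (ks ! i))}"

definition GG :: "nat list \<Rightarrow> (nat \<Rightarrow> bool list) \<Rightarrow> bool list list \<Rightarrow> (nat \<Rightarrow> bool)" where
  "GG ks A xs = restrict (\<lambda>i. dot (A i) (xs ! i)) {..<length ks}"

definition AS :: "nat list \<Rightarrow> (nat \<Rightarrow> bool list) set" where
  "AS ks = PiE {..<length ks} (\<lambda>i. bvec (ks ! i))"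

definition part :: "nat list \<Rightarrow> (nat \<Rightarrow> bool list) \<Rightarrow> bool list list set set" where
  "part ks A = kernel (PS ks) (GG ks A)"

lemma states_prod: "states (prod_dev (map lin_dev ks)) = PS ks"
  unfolding prod_dev_def states_def PS_def lin_dev_def by simp

lemma parts_prod: "parts (prod_dev (map lin_dev ks)) =
   {block_prod Ps | Ps. length Ps = length ks \<and> (\<forall>i<length ks. Ps ! i \<in> {kernel (bvec (ks ! i)) f | f. f2_linear (ks ! i) f})}"
  unfolding prod_dev_def parts_def lin_dev_def by simp

lemma finite_PS: "finite (PS ks)"
proof -
  have "PS ks \<subseteq> {xs. set xs \<subseteq> (\<Union>i<length ks. bvec (ks ! i)) \<and> length xs = length ks}"
  proof
    fix xs assume xs: "xs \<in> PS ks"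
    have "set xs \<subseteq> (\<Union>i<length ks. bvec (ks ! i))"
    proof
      fix x assume "x \<in> set xs"
      then obtain i where i: "i < length xs" "x = xs ! i" by (auto simp: in_set_conv_nth)
      thus "x \<in> (\<Union>i<length ks. bvec (ks ! i))" using xs unfolding PS_def by auto
    qed
    thus "xs \<in> {xs. set xs \<subseteq> (\<Union>i<length ks. bvec (ks ! i)) \<and> length xs = length ks}"
      using xs unfolding PS_def by auto
  qed
  moreover have "finite (\<Union>i<length ks. bvec (ks ! i))" using card_bvec(2) by blast
  ultimately show ?thesis using finite_lists_length_eq finite_subset by blast
qed

lemma block_kernel:
  assumes len: "length Ps = length ks" and K: "\<forall>i<length ks. Ps ! i = kernel (bvec (ks ! i)) (h i)"
  shows "block_prod Ps = kernel (PS ks) (\<lambda>xs. restrict (\<lambda>i. h i (xs ! i)) {..<length ks})"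
proof (rule set_eqI, rule iffI)
  let ?m = "length ks"
  fix X assume "X \<in> block_prod Ps"
  then obtain Bs where Bs: "length Bs = ?m" "\<forall>i<?m. Bs ! i \<in> Ps ! i"
    "X = {xs. length xs = ?m \<and> (\<forall>i<?m. xs ! i \<in> Bs ! i)}"
    unfolding block_prod_def using len by auto
  have "\<forall>i. \<exists>z. i < ?m \<longrightarrow> z \<in> bvec (ks ! i) \<and> Bs ! i = {y \<in> bvec (ks ! i). h i y = h i z}"
    using Bs(2) K unfolding kernel_alt by blast
  then obtain z where z: "\<And>i. i < ?m \<Longrightarrow> z i \<in> bvec (ks ! i) \<and> Bs ! i = {y \<in> bvec (ks ! i). h i y = h i (z i)}"
    by metis
  let ?zs = "map z [0..<?m]"
  have zs: "?zs \<in> PS ks" unfolding PS_def using z by auto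
  have "X = {xs \<in> PS ks. restrict (\<lambda>i. h i (xs ! i)) {..<?m} = restrict (\<lambda>i. h i (?zs ! i)) {..<?m}}"
    unfolding Bs(3) PS_def restrict_eq_iff using z by auto
  thus "X \<in> kernel (PS ks) (\<lambda>xs. restrict (\<lambda>i. h i (xs ! i)) {..<length ks})"
    unfolding kernel_alt using zs by blast
next
  let ?m = "length ks"
  fix X assume "X \<in> kernel (PS ks) (\<lambda>xs. restrict (\<lambda>i. h i (xs ! i)) {..<length ks})"
  then obtain zs where zs: "zs \<in> PS ks"
    "X = {xs \<in> PS ks. restrict (\<lambda>i. h i (xs ! i)) {..<?m} = restrict (\<lambda>i. h i (zs ! i)) {..<?m}}"
    unfolding kernel_alt by blast
  let ?Bs = "map (\<lambda>i. {y \<in> bvec (ks ! i). h i y = h i (zs ! i)}) [0..<?m]"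
  have Bin: "\<forall>i<?m. ?Bs ! i \<in> Ps ! i"
  proof (intro allI impI)
    fix i assume i: "i < ?m"
    have "zs ! i \<in> bvec (ks ! i)" using zs(1) i unfolding PS_def by auto
    thus "?Bs ! i \<in> Ps ! i" using K i unfolding kernel_alt by auto
  qed
  have XB: "X = {xs. length xs = ?m \<and> (\<forall>i<?m. xs ! i \<in> ?Bs ! i)}"
    unfolding zs(2) PS_def restrict_eq_iff by auto
  show "X \<in> block_prod Ps" unfolding block_prod_def
    by (rule CollectI, rule exI[where x="?Bs"]) (use XB len Bin in simp)
qed


lemma same_block_kernel: "same_block (kernel S f) x y \<longleftrightarrow> x \<in> S \<and> y \<in> S \<and> f x = f y"
  unfolding same_block_def kernel_alt by auto

lemma prod_if_pow:
  assumes "finite I"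
  shows "(\<Prod>i\<in>I. if P i then (a::nat) else 1) = a ^ card {i \<in> I. P i}"
proof -
  have "(\<Prod>i\<in>I. if P i then (a::nat) else 1) = (\<Prod>i\<in>I \<inter> {x. P x}. a) * (\<Prod>i\<in>I \<inter> - {x. P x}. 1)"
    using prod.If_cases[OF assms, of P "\<lambda>_. a" "\<lambda>_. 1"] by simp
  also have "\<dots> = a ^ card (I \<inter> {x. P x})" by simp
  also have "I \<inter> {x. P x} = {i \<in> I. P i}" by blast
  finally show ?thesis .
qed

lemma img_restrict:
  "(\<lambda>xs. restrict (\<lambda>i. h i (xs ! i)) {..<m}) ` {xs. length xs = m \<and> (\<forall>i<m. xs ! i \<in> X i)}
   = PiE {..<m} (\<lambda>i. h i ` X i)"
proof (rule set_eqI, rule iffI)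
  fix F assume "F \<in> (\<lambda>xs. restrict (\<lambda>i. h i (xs ! i)) {..<m}) ` {xs. length xs = m \<and> (\<forall>i<m. xs ! i \<in> X i)}"
  then obtain xs where xs: "length xs = m" "\<forall>i<m. xs ! i \<in> X i" "F = restrict (\<lambda>i. h i (xs ! i)) {..<m}"
    by blast
  thus "F \<in> PiE {..<m} (\<lambda>i. h i ` X i)" by (simp add: restrict_PiE_iff)
next
  fix F assume F: "F \<in> PiE {..<m} (\<lambda>i. h i ` X i)"
  have "\<forall>i. \<exists>y. i < m \<longrightarrow> y \<in> X i \<and> h i y = F i"
  proof
    fix i show "\<exists>y. i < m \<longrightarrow> y \<in> X i \<and> h i y = F i"
    proof (cases "i < m")
      case True
      hence "F i \<in> h i ` X i" using PiE_mem[OF F] by simp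
      then obtain y where "y \<in> X i" "F i = h i y" by blast
      thus ?thesis by (intro exI[where x=y]) simp
    next
      case False thus ?thesis by blast
    qed
  qed
  then obtain y where y0: "\<forall>i. i < m \<longrightarrow> y i \<in> X i \<and> h i (y i) = F i" by (rule choice[THEN exE])
  hence y: "\<And>i. i < m \<Longrightarrow> y i \<in> X i \<and> h i (y i) = F i" by blast
  let ?xs = "map y [0..<m]"
  have "restrict (\<lambda>i. h i (?xs ! i)) {..<m} = F"
  proof
    fix i show "restrict (\<lambda>i. h i (?xs ! i)) {..<m} i = F i"
    proof (cases "i < m")
      case True thus ?thesis using y by simp
    next
      case False
      have "F \<in> extensional {..<m}" using F unfolding PiE_iff by blast
      hence "F i = undefined" using False by (intro extensional_arb) auto
      thus ?thesis using False by simp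
    qed
  qed
  moreover have "?xs \<in> {xs. length xs = m \<and> (\<forall>i<m. xs ! i \<in> X i)}" using y by simp
  ultimately show "F \<in> (\<lambda>xs. restrict (\<lambda>i. h i (xs ! i)) {..<m}) ` {xs. length xs = m \<and> (\<forall>i<m. xs ! i \<in> X i)}"
    by (intro image_eqI[where x="?xs"]) simp_all
qed

lemma GG_image: "GG ks A ` PS ks = PiE {..<length ks} (\<lambda>i. dot (A i) ` bvec (ks ! i))"
  unfolding GG_def PS_def by (rule img_restrict)

lemma card_part:
  assumes A: "A \<in> AS ks"
  shows "card (part ks A) = 2 ^ card {i \<in> {..<length ks}. True \<in> set (A i)}"
proof -
  have "card (part ks A) = card (PiE {..<length ks} (\<lambda>i. dot (A i) ` bvec (ks ! i)))"
    unfolding part_def using card_kernel[OF finite_PS] GG_image by metis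
  also have "\<dots> = (\<Prod>i\<in>{..<length ks}. card (dot (A i) ` bvec (ks ! i)))" by (simp add: card_PiE)
  also have "\<dots> = (\<Prod>i\<in>{..<length ks}. if True \<in> set (A i) then 2 else 1)"
  proof (rule prod.cong[OF refl])
    fix i assume "i \<in> {..<length ks}"
    hence "A i \<in> bvec (ks ! i)" using A unfolding AS_def by auto
    thus "card (dot (A i) ` bvec (ks ! i)) = (if True \<in> set (A i) then 2 else 1)"
      using dot_image by simp
  qed
  also have "\<dots> = 2 ^ card {i \<in> {..<length ks}. True \<in> set (A i)}" by (rule prod_if_pow) simp
  finally show ?thesis .
qed

lemma meet_part:
  assumes A: "A \<in> AS ks" and B: "B \<in> AS ks"
  shows "meetcount (part ks A) (part ks B) =
     (\<Prod>i\<in>{..<length ks}. card ((\<lambda>y. (dot (A i) y, dot (B i) y)) ` bvec (ks ! i)))"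
proof -
  let ?m = "length ks"
  let ?p = "\<lambda>x. (GG ks A x, GG ks B x)"
  define z where "z q = restrict (\<lambda>i. (fst q i, snd q i)) {..<?m}" for q :: "(nat \<Rightarrow> bool) \<times> (nat \<Rightarrow> bool)"
  have "meetcount (part ks A) (part ks B) = card (?p ` PS ks)"
    unfolding part_def by (rule meet_kernel[OF finite_PS])
  also have "\<dots> = card (z ` ?p ` PS ks)"
  proof -
    have "inj_on z (?p ` PS ks)"
    proof
      fix q1 q2 assume q1: "q1 \<in> ?p ` PS ks" and q2: "q2 \<in> ?p ` PS ks" and e: "z q1 = z q2"
      obtain x1 where x1: "q1 = ?p x1" using q1 by blast
      obtain x2 where x2: "q2 = ?p x2" using q2 by blast
      have "\<forall>i<?m. fst q1 i = fst q2 i \<and> snd q1 i = snd q2 i"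
        using e unfolding z_def restrict_eq_iff by auto
      hence "fst q1 = fst q2" "snd q1 = snd q2" unfolding x1 x2 GG_def fun_eq_iff by auto
      thus "q1 = q2" by (simp add: prod_eq_iff)
    qed
    thus ?thesis by (simp add: card_image)
  qed
  also have "z ` ?p ` PS ks = (\<lambda>xs. restrict (\<lambda>i. (\<lambda>y. (dot (A i) y, dot (B i) y)) (xs ! i)) {..<?m}) ` PS ks"
    unfolding image_image z_def GG_def by (intro image_cong refl) (simp add: restrict_def fun_eq_iff)
  also have "\<dots> = PiE {..<?m} (\<lambda>i. (\<lambda>y. (dot (A i) y, dot (B i) y)) ` bvec (ks ! i))"
    unfolding PS_def by (rule img_restrict)
  also have "card \<dots> = (\<Prod>i\<in>{..<length ks}. card ((\<lambda>y. (dot (A i) y, dot (B i) y)) ` bvec (ks ! i)))"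
    by (simp add: card_PiE)
  finally show ?thesis .
qed


abbreviation DD :: "nat list \<Rightarrow> bool list list asd" where
  "DD ks \<equiv> prod_dev (map lin_dev ks)"

definition TT :: "nat list \<Rightarrow> nat \<Rightarrow> bool list set" where
  "TT ks i = {a \<in> bvec (ks ! i). True \<in> set a}"

definition AT :: "nat list \<Rightarrow> (nat \<Rightarrow> bool list) set" where
  "AT ks = PiE {..<length ks} (TT ks)"

definition dd :: "nat list \<Rightarrow> (nat \<Rightarrow> bool list) \<Rightarrow> (nat \<Rightarrow> bool list) \<Rightarrow> nat" where
  "dd ks A B = card {i \<in> {..<length ks}. A i \<noteq> B i}"

lemma dot_comm: "dot a x = dot x a"
proof (induction a arbitrary: x)
  case Nil thus ?case by (cases x) auto
next
  case (Cons b as) thus ?case by (cases x) auto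
qed

lemma parts_eq: "parts (DD ks) = part ks ` AS ks"
proof (rule set_eqI, rule iffI)
  let ?m = "length ks"
  fix P assume "P \<in> parts (DD ks)"
  then obtain Ps where Ps: "length Ps = ?m" "\<forall>i<?m. Ps ! i \<in> {kernel (bvec (ks ! i)) f | f. f2_linear (ks ! i) f}"
    "P = block_prod Ps" unfolding parts_prod by blast
  have "\<forall>i. \<exists>f. i < ?m \<longrightarrow> f2_linear (ks ! i) f \<and> Ps ! i = kernel (bvec (ks ! i)) f" using Ps(2) by blast
  then obtain f where f: "\<forall>i. i < ?m \<longrightarrow> f2_linear (ks ! i) (f i) \<and> Ps ! i = kernel (bvec (ks ! i)) (f i)"
    by (rule choice[THEN exE])
  define A where "A = restrict (\<lambda>i. coef (ks ! i) (f i)) {..<?m}"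
  have cb: "coef n g \<in> bvec n" for n g by (simp add: coef_def bvec_def)
  have A: "A \<in> AS ks" unfolding A_def AS_def using cb by (auto simp: restrict_PiE_iff)
  have K: "\<forall>i<?m. Ps ! i = kernel (bvec (ks ! i)) (dot (A i))"
  proof (intro allI impI)
    fix i assume i: "i < ?m"
    have "Ps ! i = kernel (bvec (ks ! i)) (f i)" using f i by blast
    also have "\<dots> = kernel (bvec (ks ! i)) (dot (A i))"
      using lin_dot(1)[of "ks ! i" "f i"] f i unfolding A_def by (intro kernel_cong) auto
    finally show "Ps ! i = kernel (bvec (ks ! i)) (dot (A i))" .
  qed
  have "P = part ks A" unfolding Ps(3) block_kernel[OF Ps(1) K] part_def GG_def ..
  thus "P \<in> part ks ` AS ks" using A by blast
next
  let ?m = "length ks"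
  fix P assume "P \<in> part ks ` AS ks"
  then obtain A where A: "A \<in> AS ks" "P = part ks A" by blast
  let ?Ps = "map (\<lambda>i. kernel (bvec (ks ! i)) (dot (A i))) [0..<?m]"
  have K: "\<forall>i<?m. ?Ps ! i = kernel (bvec (ks ! i)) (dot (A i))" by simp
  have lin: "\<forall>i<?m. ?Ps ! i \<in> {kernel (bvec (ks ! i)) f | f. f2_linear (ks ! i) f}"
  proof (intro allI impI)
    fix i assume i: "i < ?m"
    have "A i \<in> bvec (ks ! i)" using A(1) i unfolding AS_def by auto
    hence "f2_linear (ks ! i) (dot (A i))" by (intro dot_lin) (simp add: bvec_def)
    thus "?Ps ! i \<in> {kernel (bvec (ks ! i)) f | f. f2_linear (ks ! i) f}" using i by auto
  qed
  have bk: "block_prod ?Ps = kernel (PS ks) (\<lambda>xs. restrict (\<lambda>i. dot (A i) (xs ! i)) {..<?m})"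
    by (rule block_kernel) (use K in simp_all)
  have "P = block_prod ?Ps" unfolding A(2) bk part_def GG_def ..
  thus "P \<in> parts (DD ks)" unfolding parts_prod using lin by auto
qed

lemma AS_ne: "restrict (\<lambda>i. replicate (ks ! i) False) {..<length ks} \<in> AS ks"
  unfolding AS_def using bvec_ne by (auto simp: restrict_PiE_iff)

lemma good_DD: "good (DD ks)"
  unfolding good_def
proof (intro conjI ballI impI)
  show "finite (states (DD ks))" unfolding states_prod by (rule finite_PS)
  show "parts (DD ks) \<noteq> {}" unfolding parts_eq using AS_ne by blast
  fix P assume "P \<in> parts (DD ks)"
  then obtain A where "P = part ks A" unfolding parts_eq by blast
  thus "is_part (states (DD ks)) P" unfolding states_prod part_def by (simp add: kernel_is_part)
next
  let ?m = "length ks"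
  fix x y assume x: "x \<in> states (DD ks)" and y: "y \<in> states (DD ks)" and ne: "x \<noteq> y"
  have lx: "length x = ?m" "\<forall>i<?m. x ! i \<in> bvec (ks ! i)" using x unfolding states_prod PS_def by auto
  have ly: "length y = ?m" "\<forall>i<?m. y ! i \<in> bvec (ks ! i)" using y unfolding states_prod PS_def by auto
  have "\<exists>i<?m. x ! i \<noteq> y ! i"
  proof (rule ccontr)
    assume "\<not> (\<exists>i<?m. x ! i \<noteq> y ! i)"
    hence "x = y" using lx ly by (intro nth_equalityI) auto
    thus False using ne by simp
  qed
  then obtain i where i: "i < ?m" "x ! i \<noteq> y ! i" by blast
  have li: "length (x ! i) = ks ! i" "length (y ! i) = ks ! i" using lx ly i unfolding bvec_def by auto
  have "\<exists>j<ks ! i. x ! i ! j \<noteq> y ! i ! j"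
  proof (rule ccontr)
    assume "\<not> (\<exists>j<ks ! i. x ! i ! j \<noteq> y ! i ! j)"
    hence "x ! i = y ! i" using li by (intro nth_equalityI) auto
    thus False using i by simp
  qed
  then obtain j where j: "j < ks ! i" "x ! i ! j \<noteq> y ! i ! j" by blast
  define A where "A = restrict (\<lambda>l. if l = i then unit (ks ! l) j else replicate (ks ! l) False) {..<?m}"
  have A: "A \<in> AS ks" unfolding A_def AS_def using unit_bvec bvec_ne by (auto simp: restrict_PiE_iff)
  have Ai: "A i = unit (ks ! i) j" unfolding A_def using i by simp
  have dx: "dot (A i) (x ! i) = x ! i ! j" unfolding Ai using dot_comm dot_unit[of j "x ! i"] li j by metis
  have dy: "dot (A i) (y ! i) = y ! i ! j" unfolding Ai using dot_comm dot_unit[of j "y ! i"] li j by metis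
  have "GG ks A x \<noteq> GG ks A y"
  proof
    assume "GG ks A x = GG ks A y"
    hence "dot (A i) (x ! i) = dot (A i) (y ! i)" unfolding GG_def restrict_eq_iff using i by auto
    thus False using dx dy j by simp
  qed
  hence "\<not> same_block (part ks A) x y" unfolding part_def same_block_kernel by blast
  moreover have "part ks A \<in> parts (DD ks)" unfolding parts_eq using A by blast
  ultimately show "\<exists>P\<in>parts (DD ks). \<not> same_block P x y" by blast
qed


lemma AT_AS: "AT ks \<subseteq> AS ks"
  unfolding AT_def AS_def TT_def by (auto simp: PiE_iff)

lemma AT_iff: "A \<in> AT ks \<longleftrightarrow> A \<in> AS ks \<and> (\<forall>i<length ks. True \<in> set (A i))"
  unfolding AT_def AS_def TT_def by (auto simp: PiE_iff)

lemma card_part_AT: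
  assumes "A \<in> AS ks"
  shows "card (part ks A) \<le> 2 ^ length ks" "card (part ks A) = 2 ^ length ks \<longleftrightarrow> A \<in> AT ks"
proof -
  let ?S = "{i \<in> {..<length ks}. True \<in> set (A i)}"
  have c: "card ?S \<le> length ks" using card_mono[of "{..<length ks}" ?S] by auto
  show "card (part ks A) \<le> 2 ^ length ks" unfolding card_part[OF assms] using c by simp
  have "card (part ks A) = 2 ^ length ks \<longleftrightarrow> card ?S = length ks"
    unfolding card_part[OF assms] by simp
  also have "\<dots> \<longleftrightarrow> ?S = {..<length ks}"
  proof
    assume "card ?S = length ks"
    thus "?S = {..<length ks}" using card_subset_eq[of "{..<length ks}" ?S] by auto
  qed simp
  also have "\<dots> \<longleftrightarrow> A \<in> AT ks" using assms unfolding AT_iff by auto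
  finally show "card (part ks A) = 2 ^ length ks \<longleftrightarrow> A \<in> AT ks" .
qed

lemma AT_ne:
  assumes pos: "\<forall>k\<in>set ks. 0 < k"
  shows "restrict (\<lambda>i. replicate (ks ! i) True) {..<length ks} \<in> AT ks"
  unfolding AT_def restrict_PiE_iff
proof
  fix i assume "i \<in> {..<length ks}"
  hence "ks ! i > 0" using pos by simp
  hence "True \<in> set (replicate (ks ! i) True)" by simp
  thus "replicate (ks ! i) True \<in> TT ks i" unfolding TT_def bvec_def by simp
qed

lemma maxc_DD:
  assumes pos: "\<forall>k\<in>set ks. 0 < k"
  shows "maxc (DD ks) = 2 ^ length ks"
proof -
  have fin: "finite (card ` parts (DD ks))" using good_finite_parts(1)[OF good_DD] by simp
  have le: "c \<le> 2 ^ length ks" if cin: "c \<in> card ` parts (DD ks)" for c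
  proof -
    obtain A where "A \<in> AS ks" "c = card (part ks A)" using cin unfolding parts_eq by blast
    thus ?thesis using card_part_AT(1) by simp
  qed
  have A1: "restrict (\<lambda>i. replicate (ks ! i) True) {..<length ks} \<in> AS ks" using AT_ne[OF pos] AT_AS by blast
  have "2 ^ length ks = card (part ks (restrict (\<lambda>i. replicate (ks ! i) True) {..<length ks}))"
    using card_part_AT(2)[OF A1] AT_ne[OF pos] by simp
  hence "2 ^ length ks \<in> card ` parts (DD ks)" unfolding parts_eq using A1 by blast
  thus ?thesis unfolding maxc_def using fin le by (intro Max_eqI) auto
qed

lemma FF_DD:
  assumes pos: "\<forall>k\<in>set ks. 0 < k"
  shows "FF (DD ks) = part ks ` AT ks"
proof (rule set_eqI, rule iffI)
  fix P assume "P \<in> FF (DD ks)"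
  then obtain A where A: "A \<in> AS ks" "P = part ks A" "card P = 2 ^ length ks"
    unfolding FF_def maxc_DD[OF pos] parts_eq by blast
  hence "A \<in> AT ks" using card_part_AT(2) by blast
  thus "P \<in> part ks ` AT ks" using A by blast
next
  fix P assume "P \<in> part ks ` AT ks"
  then obtain A where A: "A \<in> AT ks" "P = part ks A" by blast
  have "A \<in> AS ks" using A AT_AS by blast
  thus "P \<in> FF (DD ks)" unfolding FF_def maxc_DD[OF pos] parts_eq using A card_part_AT(2) by blast
qed

lemma prod_two_four:
  "(\<Prod>i\<in>{..<m::nat}. (if P i then 2 else 4::nat)) = 2 ^ m * 2 ^ card {i \<in> {..<m}. \<not> P i}"
proof -
  have "(\<Prod>i\<in>{..<m}. (if P i then 2 else 4::nat)) = (\<Prod>i\<in>{..<m}. 2 * (if \<not> P i then 2 else 1::nat))"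
    by (intro prod.cong) auto
  also have "\<dots> = 2 ^ m * (\<Prod>i\<in>{..<m}. (if \<not> P i then 2 else 1::nat))"
    by (simp add: prod.distrib)
  also have "\<dots> = 2 ^ m * 2 ^ card {i \<in> {..<m}. \<not> P i}" using prod_if_pow[of "{..<m}"] by simp
  finally show ?thesis .
qed

lemma card_bb: "card (UNIV :: (bool \<times> bool) set) = 4"
  using card_cartesian_product[of "UNIV::bool set" "UNIV::bool set"] by simp

lemma meet_val:
  assumes A: "A \<in> AT ks" and B: "B \<in> AT ks"
  shows "meetcount (part ks A) (part ks B) = 2 ^ length ks * 2 ^ dd ks A B"
proof -
  have AS: "A \<in> AS ks" "B \<in> AS ks" using A B AT_AS by auto
  have "meetcount (part ks A) (part ks B) = (\<Prod>i\<in>{..<length ks}. (if A i = B i then 2 else 4::nat))"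
    unfolding meet_part[OF AS]
  proof (rule prod.cong[OF refl])
    fix i assume i: "i \<in> {..<length ks}"
    have a: "A i \<in> bvec (ks ! i)" "True \<in> set (A i)" using A i unfolding AT_def TT_def by auto
    have b: "B i \<in> bvec (ks ! i)" "True \<in> set (B i)" using B i unfolding AT_def TT_def by auto
    show "card ((\<lambda>y. (dot (A i) y, dot (B i) y)) ` bvec (ks ! i)) = (if A i = B i then 2 else 4)"
    proof (cases "A i = B i")
      case True
      have "(\<lambda>y. (dot (A i) y, dot (B i) y)) ` bvec (ks ! i) = (\<lambda>c. (c, c)) ` (dot (A i) ` bvec (ks ! i))"
        unfolding True image_image ..
      also have "\<dots> = (\<lambda>c. (c, c)) ` UNIV" using dot_image[OF a(1)] a(2) by simp
      moreover have "card ((\<lambda>c::bool. (c, c)) ` UNIV) = card (UNIV :: bool set)"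
        by (rule card_image) (simp add: inj_on_def)
      ultimately have "card ((\<lambda>y. (dot (A i) y, dot (B i) y)) ` bvec (ks ! i)) = card (UNIV :: bool set)"
        by simp
      thus ?thesis using True by simp
    next
      case False
      thus ?thesis using dot_pair_image[OF a(1) b(1) a(2) b(2) False] card_bb by simp
    qed
  qed
  also have "\<dots> = 2 ^ length ks * 2 ^ dd ks A B" unfolding dd_def by (rule prod_two_four)
  finally show ?thesis .
qed

lemma card_val: "A \<in> AT ks \<Longrightarrow> card (part ks A) = 2 ^ length ks"
  using card_part_AT(2) AT_AS by blast

lemma adj_iff:
  assumes A: "A \<in> AT ks" and B: "B \<in> AT ks"
  shows "adj (part ks A) (part ks B) \<longleftrightarrow> dd ks A B = 1"
proof -
  have "adj (part ks A) (part ks B) \<longleftrightarrow> (2::nat) ^ length ks * 2 ^ dd ks A B = 2 * 2 ^ length ks"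
    unfolding adj_def meet_val[OF A B] card_val[OF A] ..
  also have "\<dots> \<longleftrightarrow> (2::nat) ^ dd ks A B = 2 ^ 1" by simp
  also have "\<dots> \<longleftrightarrow> dd ks A B = 1" by (rule power_inject_exp) simp
  finally show ?thesis .
qed

lemma dd_zero:
  assumes A: "A \<in> AT ks" and B: "B \<in> AT ks" and d: "dd ks A B = 0"
  shows "A = B"
proof -
  have "{i \<in> {..<length ks}. A i \<noteq> B i} = {}" using d unfolding dd_def by simp
  thus ?thesis using A B unfolding AT_def by (intro PiE_ext[of A _ "TT ks" B]) auto
qed

lemma part_inj: "inj_on (part ks) (AT ks)"
proof
  fix A B assume A: "A \<in> AT ks" and B: "B \<in> AT ks" and e: "part ks A = part ks B"
  have "(2::nat) ^ length ks * 2 ^ dd ks A B = 2 ^ length ks * 2 ^ dd ks A A"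
    using meet_val[OF A B] meet_val[OF A A] e by simp
  moreover have "dd ks A A = 0" unfolding dd_def by simp
  ultimately have "dd ks A B = 0" by simp
  thus "A = B" using dd_zero[OF A B] by blast
qed


context
  fixes ks :: "nat list" and A0 :: "nat \<Rightarrow> bool list"
  assumes A0: "A0 \<in> AT ks"
begin

definition IDX :: "(nat \<times> bool list) set" where
  "IDX = Sigma {..<length ks} (\<lambda>i. TT ks i - {A0 i})"

definition Phi :: "nat \<times> bool list \<Rightarrow> (nat \<Rightarrow> bool list)" where
  "Phi p = A0(fst p := snd p)"

lemma Phi_AT: "p \<in> IDX \<Longrightarrow> Phi p \<in> AT ks"
proof -
  assume p: "p \<in> IDX"
  have "snd p \<in> TT ks (fst p)" "fst p < length ks" using p unfolding IDX_def by auto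
  hence "A0(fst p := snd p) \<in> PiE (insert (fst p) {..<length ks}) (TT ks)"
    using A0 unfolding AT_def by (intro PiE_fun_upd) auto
  moreover have "insert (fst p) {..<length ks} = {..<length ks}" using \<open>fst p < length ks\<close> by auto
  ultimately show ?thesis unfolding Phi_def AT_def by simp
qed

lemma diffset_Phi:
  assumes p: "p \<in> IDX" and q: "q \<in> IDX"
  shows "{l \<in> {..<length ks}. Phi p l \<noteq> Phi q l} =
     (if fst p = fst q then (if snd p = snd q then {} else {fst p}) else {fst p, fst q})"
proof -
  obtain i c where pi: "p = (i, c)" by (cases p)
  obtain j e where qj: "q = (j, e)" by (cases q)
  have i: "i < length ks" "c \<noteq> A0 i" using p pi unfolding IDX_def by auto
  have j: "j < length ks" "e \<noteq> A0 j" using q qj unfolding IDX_def by auto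
  show ?thesis unfolding pi qj Phi_def using i j by auto
qed

lemma dd_Phi:
  assumes p: "p \<in> IDX" and q: "q \<in> IDX"
  shows "dd ks (Phi p) (Phi q) = 1 \<longleftrightarrow> fst p = fst q \<and> snd p \<noteq> snd q"
  unfolding dd_def diffset_Phi[OF p q] by auto

lemma dd_A0_Phi:
  assumes p: "p \<in> IDX"
  shows "dd ks A0 (Phi p) = 1"
proof -
  obtain i c where pi: "p = (i, c)" by (cases p)
  have i: "i < length ks" "c \<noteq> A0 i" using p pi unfolding IDX_def by auto
  have "{l \<in> {..<length ks}. A0 l \<noteq> Phi p l} = {i}" unfolding pi Phi_def using i by auto
  thus ?thesis unfolding dd_def by simp
qed

lemma Phi_inj: "inj_on Phi IDX"
proof
  fix p q assume p: "p \<in> IDX" and q: "q \<in> IDX" and e: "Phi p = Phi q"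
  have "{l \<in> {..<length ks}. Phi p l \<noteq> Phi q l} = {}" using e by simp
  thus "p = q" unfolding diffset_Phi[OF p q] by (auto split: if_splits simp: prod_eq_iff)
qed

lemma N_eq: "{B \<in> AT ks. dd ks A0 B = 1} = Phi ` IDX"
proof (rule set_eqI, rule iffI)
  fix B assume "B \<in> {B \<in> AT ks. dd ks A0 B = 1}"
  hence B: "B \<in> AT ks" "card {l \<in> {..<length ks}. A0 l \<noteq> B l} = 1" unfolding dd_def by auto
  have "\<exists>i. {l \<in> {..<length ks}. A0 l \<noteq> B l} = {i}" using B(2) card_1_singleton_iff[of "{l \<in> {..<length ks}. A0 l \<noteq> B l}"] by simp
  then obtain i where i: "{l \<in> {..<length ks}. A0 l \<noteq> B l} = {i}" by blast
  have il: "i < length ks" "A0 i \<noteq> B i" using i by auto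
  have Bi: "B i \<in> TT ks i" using B(1) il unfolding AT_def by auto
  have pin: "(i, B i) \<in> IDX" unfolding IDX_def using il Bi by auto
  have "B = Phi (i, B i)"
  proof (rule PiE_ext[of B "{..<length ks}" "TT ks"])
    show "B \<in> PiE {..<length ks} (TT ks)" using B(1) unfolding AT_def .
    show "Phi (i, B i) \<in> PiE {..<length ks} (TT ks)" using Phi_AT[OF pin] unfolding AT_def .
    fix l assume l: "l \<in> {..<length ks}"
    show "B l = Phi (i, B i) l"
    proof (cases "l = i")
      case True thus ?thesis unfolding Phi_def by simp
    next
      case False
      hence "l \<notin> {l \<in> {..<length ks}. A0 l \<noteq> B l}" using i by blast
      thus ?thesis using l False unfolding Phi_def by auto
    qed
  qed
  thus "B \<in> Phi ` IDX" using pin by blast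
next
  fix B assume "B \<in> Phi ` IDX"
  then obtain p where p: "p \<in> IDX" "B = Phi p" by blast
  thus "B \<in> {B \<in> AT ks. dd ks A0 B = 1}" using Phi_AT dd_A0_Phi by auto
qed

lemma inner_eq:
  assumes p: "p \<in> IDX"
  shows "{C \<in> AT ks. dd ks A0 C = 1 \<and> dd ks (Phi p) C = 1} = Phi ` {q \<in> IDX. fst q = fst p \<and> snd q \<noteq> snd p}"
proof -
  have "{C \<in> AT ks. dd ks A0 C = 1 \<and> dd ks (Phi p) C = 1} = {C \<in> {B \<in> AT ks. dd ks A0 B = 1}. dd ks (Phi p) C = 1}"
    by auto
  also have "\<dots> = {C \<in> Phi ` IDX. dd ks (Phi p) C = 1}" unfolding N_eq ..
  also have "\<dots> = Phi ` {q \<in> IDX. dd ks (Phi p) (Phi q) = 1}" by auto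
  also have "{q \<in> IDX. dd ks (Phi p) (Phi q) = 1} = {q \<in> IDX. fst q = fst p \<and> snd q \<noteq> snd p}"
    using dd_Phi[OF p] by auto
  finally show ?thesis .
qed

lemma finite_TT: "finite (TT ks i)" unfolding TT_def using card_bvec(2) by simp

lemma card_inner:
  assumes p: "p \<in> IDX"
  shows "card {C \<in> AT ks. dd ks A0 C = 1 \<and> dd ks (Phi p) C = 1} = card (TT ks (fst p) - {A0 (fst p)}) - 1"
proof -
  have sub: "{q \<in> IDX. fst q = fst p \<and> snd q \<noteq> snd p} \<subseteq> IDX" by blast
  have "card {C \<in> AT ks. dd ks A0 C = 1 \<and> dd ks (Phi p) C = 1} = card {q \<in> IDX. fst q = fst p \<and> snd q \<noteq> snd p}"
    unfolding inner_eq[OF p] using card_image[OF inj_on_subset[OF Phi_inj sub]] .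
  also have "{q \<in> IDX. fst q = fst p \<and> snd q \<noteq> snd p} = Pair (fst p) ` (TT ks (fst p) - {A0 (fst p)} - {snd p})"
    using p unfolding IDX_def by auto
  also have "card \<dots> = card (TT ks (fst p) - {A0 (fst p)} - {snd p})" by (rule card_image) (simp add: inj_on_def)
  also have "\<dots> = card (TT ks (fst p) - {A0 (fst p)}) - 1"
    using p finite_TT unfolding IDX_def by (intro card_Diff_singleton) auto
  finally show ?thesis .
qed

lemma invar_formula:
  assumes pos: "\<forall>k\<in>set ks. 0 < k"
  shows "invar (DD ks) (part ks A0) s =
     (\<Sum>i\<in>{i \<in> {..<length ks}. card (TT ks i - {A0 i}) - 1 = s}. card (TT ks i - {A0 i}))"
proof -
  let ?W = "\<lambda>B. {C \<in> AT ks. dd ks A0 C = 1 \<and> dd ks B C = 1}"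
  have FF: "FF (DD ks) = part ks ` AT ks" using FF_DD[OF pos] .
  have gen: "{u \<in> FF (DD ks). Q u} = part ks ` {B \<in> AT ks. Q (part ks B)}" for Q
    unfolding FF by blast
  have st1: "{w \<in> FF (DD ks). adj (part ks A0) w \<and> adj (part ks B) w} = part ks ` ?W B" if B: "B \<in> AT ks" for B
  proof -
    have "{C \<in> AT ks. adj (part ks A0) (part ks C) \<and> adj (part ks B) (part ks C)} = ?W B"
      by (rule Collect_cong) (use adj_iff[OF A0] adj_iff[OF B] in auto)
    thus ?thesis unfolding gen by simp
  qed
  have cW: "card (part ks ` ?W B) = card (?W B)" for B
    by (rule card_image[OF inj_on_subset[OF part_inj]]) auto
  have eqv: "(adj (part ks A0) (part ks B) \<and> card {w \<in> FF (DD ks). adj (part ks A0) w \<and> adj (part ks B) w} = s)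
      \<longleftrightarrow> (dd ks A0 B = 1 \<and> card (?W B) = s)" if B: "B \<in> AT ks" for B
    using adj_iff[OF A0 B] st1[OF B] cW[of B] by simp
  have "{u \<in> FF (DD ks). adj (part ks A0) u \<and> card {w \<in> FF (DD ks). adj (part ks A0) w \<and> adj u w} = s}
      = part ks ` {B \<in> AT ks. dd ks A0 B = 1 \<and> card (?W B) = s}"
  proof -
    let ?Q = "\<lambda>u. adj (part ks A0) u \<and> card {w \<in> FF (DD ks). adj (part ks A0) w \<and> adj u w} = s"
    have "{u \<in> FF (DD ks). ?Q u} = part ks ` {B \<in> AT ks. ?Q (part ks B)}" by (rule gen)
    also have "{B \<in> AT ks. ?Q (part ks B)} = {B \<in> AT ks. dd ks A0 B = 1 \<and> card (?W B) = s}"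
      by (rule Collect_cong) (use eqv in blast)
    finally show ?thesis .
  qed
  hence "invar (DD ks) (part ks A0) s = card (part ks ` {B \<in> AT ks. dd ks A0 B = 1 \<and> card (?W B) = s})"
    unfolding invar_def by simp
  also have "\<dots> = card {B \<in> AT ks. dd ks A0 B = 1 \<and> card (?W B) = s}"
    by (rule card_image[OF inj_on_subset[OF part_inj]]) blast
  also have "{B \<in> AT ks. dd ks A0 B = 1 \<and> card (?W B) = s} = {B \<in> {B \<in> AT ks. dd ks A0 B = 1}. card (?W B) = s}"
    by blast
  also have "\<dots> = {B \<in> Phi ` IDX. card (?W B) = s}" unfolding N_eq ..
  also have "\<dots> = Phi ` {p \<in> IDX. card (?W (Phi p)) = s}" by blast
  also have "{p \<in> IDX. card (?W (Phi p)) = s} = {p \<in> IDX. card (TT ks (fst p) - {A0 (fst p)}) - 1 = s}"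
    by (rule Collect_cong) (use card_inner in auto)
  also have "card (Phi ` \<dots>) = card {p \<in> IDX. card (TT ks (fst p) - {A0 (fst p)}) - 1 = s}"
    by (rule card_image[OF inj_on_subset[OF Phi_inj]]) auto
  also have "{p \<in> IDX. card (TT ks (fst p) - {A0 (fst p)}) - 1 = s} =
      Sigma {i \<in> {..<length ks}. card (TT ks i - {A0 i}) - 1 = s} (\<lambda>i. TT ks i - {A0 i})"
    unfolding IDX_def by auto
  also have "card \<dots> = (\<Sum>i\<in>{i \<in> {..<length ks}. card (TT ks i - {A0 i}) - 1 = s}. card (TT ks i - {A0 i}))"
    using finite_TT by (intro card_SigmaI) auto
  finally show ?thesis .
qed

end


lemma refines_kernel:
  assumes phi: "\<phi> ` S \<subseteq> S'" and h: "\<forall>x\<in>S. \<forall>y\<in>S. g' (\<phi> x) = g' (\<phi> y) \<longrightarrow> g x = g y"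
  shows "Defs.refines (pcomp S (kernel S' g') \<phi>) (kernel S g)"
  unfolding Defs.refines_def
proof (rule ballI)
  fix B assume "B \<in> pcomp S (kernel S' g') \<phi>"
  hence "B \<in> (\<lambda>x. {y \<in> S. same_block (kernel S' g') (\<phi> x) (\<phi> y)}) ` S" unfolding pcomp_def .
  then obtain x where x: "x \<in> S" "B = {y \<in> S. same_block (kernel S' g') (\<phi> x) (\<phi> y)}" by (rule imageE) simp
  have pS: "\<phi> y \<in> S'" if "y \<in> S" for y using phi that by blast
  have sub: "B \<subseteq> {y \<in> S. g y = g x}"
  proof
    fix y assume "y \<in> B"
    hence y: "y \<in> S" "same_block (kernel S' g') (\<phi> x) (\<phi> y)" using x(2) by auto
    hence "g' (\<phi> x) = g' (\<phi> y)" unfolding same_block_kernel by simp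
    hence "g x = g y" using h x(1) y(1) by blast
    thus "y \<in> {y \<in> S. g y = g x}" using y(1) by simp
  qed
  have "{y \<in> S. g y = g x} \<in> kernel S g" unfolding kernel_alt using x(1) by (rule imageI)
  thus "\<exists>C\<in>kernel S g. B \<subseteq> C" using sub by blast
qed

lemma perm_le:
  assumes len: "length rs = length ks" and bij: "bij_betw \<delta> {..<length ks} {..<length ks}"
    and eq: "\<forall>j<length ks. rs ! j = ks ! (\<delta> j)"
  shows "dev_le (DD ks) (DD rs)"
proof -
  let ?m = "length ks"
  have dm: "\<delta> j < ?m" if "j < ?m" for j using bij that unfolding bij_betw_def by auto
  define \<phi> where "\<phi> xs = map (\<lambda>j. xs ! (\<delta> j)) [0..<?m]" for xs :: "bool list list"
  define sel where "sel P = (SOME A. A \<in> AS ks \<and> P = part ks A)" for P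
  define \<alpha> where "\<alpha> P = part rs (restrict (\<lambda>j. sel P (\<delta> j)) {..<?m})" for P
  have phi: "\<phi> ` states (DD ks) \<subseteq> states (DD rs)"
    unfolding states_prod PS_def \<phi>_def using len eq dm by auto
  have "\<alpha> P \<in> parts (DD rs) \<and> Defs.refines (pcomp (states (DD ks)) (\<alpha> P) \<phi>) P" if P: "P \<in> parts (DD ks)" for P
  proof -
    have ex: "\<exists>A. A \<in> AS ks \<and> P = part ks A" using P unfolding parts_eq by blast
    have "sel P \<in> AS ks \<and> P = part ks (sel P)" unfolding sel_def by (rule someI_ex[OF ex])
    hence A: "sel P \<in> AS ks" "P = part ks (sel P)" by auto
    let ?B = "restrict (\<lambda>j. sel P (\<delta> j)) {..<?m}"
    have B: "?B \<in> AS rs" unfolding AS_def len restrict_PiE_iff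
    proof
      fix j assume j: "j \<in> {..<length ks}"
      hence "sel P (\<delta> j) \<in> bvec (ks ! \<delta> j)" using A(1) dm len unfolding AS_def by auto
      thus "sel P (\<delta> j) \<in> bvec (rs ! j)" using eq j len by simp
    qed
    have "\<alpha> P \<in> parts (DD rs)" unfolding \<alpha>_def parts_eq using B by blast
    moreover have "Defs.refines (pcomp (PS ks) (kernel (PS rs) (GG rs ?B)) \<phi>) (kernel (PS ks) (GG ks (sel P)))"
    proof (rule refines_kernel)
      show "\<phi> ` PS ks \<subseteq> PS rs" using phi unfolding states_prod .
      show "\<forall>x\<in>PS ks. \<forall>y\<in>PS ks. GG rs ?B (\<phi> x) = GG rs ?B (\<phi> y) \<longrightarrow> GG ks (sel P) x = GG ks (sel P) y"
      proof (intro ballI impI)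
        fix x y assume "x \<in> PS ks" "y \<in> PS ks" and e: "GG rs ?B (\<phi> x) = GG rs ?B (\<phi> y)"
        have ej: "dot (sel P (\<delta> j)) (x ! \<delta> j) = dot (sel P (\<delta> j)) (y ! \<delta> j)" if j: "j < ?m" for j
        proof -
          have "GG rs ?B (\<phi> x) j = GG rs ?B (\<phi> y) j" using e by simp
          thus ?thesis using j len unfolding GG_def \<phi>_def by simp
        qed
        have "dot (sel P i) (x ! i) = dot (sel P i) (y ! i)" if i: "i < ?m" for i
        proof -
          have "i \<in> \<delta> ` {..<?m}" using bij i unfolding bij_betw_def by simp
          then obtain j where "j < ?m" "i = \<delta> j" by auto
          thus ?thesis using ej by simp
        qed
        thus "GG ks (sel P) x = GG ks (sel P) y" unfolding GG_def restrict_eq_iff by simp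
      qed
    qed
    hence "Defs.refines (pcomp (states (DD ks)) (\<alpha> P) \<phi>) (part ks (sel P))"
      unfolding \<alpha>_def part_def states_prod .
    hence "Defs.refines (pcomp (states (DD ks)) (\<alpha> P) \<phi>) P" using A(2) by simp
    ultimately show ?thesis by blast
  qed
  thus ?thesis unfolding dev_le_def using phi by blast
qed

lemma card_TT_minus:
  assumes "A0 \<in> AT ks" "i < length ks"
  shows "card (TT ks i - {A0 i}) = 2 ^ (ks ! i) - 2"
proof -
  have "A0 i \<in> TT ks i" using assms unfolding AT_def by auto
  hence "card (TT ks i - {A0 i}) = card (TT ks i) - 1" using finite_TT by (simp add: card_Diff_singleton)
  also have "card (TT ks i) = 2 ^ (ks ! i) - 1" unfolding TT_def by (rule card_nz)
  finally show ?thesis by simp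
qed

lemma count_t:
  assumes pos: "\<forall>k\<in>set ks. 0 < k" and A0: "A0 \<in> AT ks" and t: "2 \<le> t"
  shows "invar (DD ks) (part ks A0) (2 ^ t - 3) = card {i \<in> {..<length ks}. ks ! i = t} * (2 ^ t - 2)"
proof -
  have e: "{i \<in> {..<length ks}. card (TT ks i - {A0 i}) - 1 = 2 ^ t - 3} = {i \<in> {..<length ks}. ks ! i = t}"
  proof (rule Collect_cong)
    fix i
    show "(i \<in> {..<length ks} \<and> card (TT ks i - {A0 i}) - 1 = 2 ^ t - 3) \<longleftrightarrow> (i \<in> {..<length ks} \<and> ks ! i = t)"
    proof (cases "i < length ks")
      case True
      have k: "ks ! i > 0" using pos True by simp
      have t4: "(2::nat) ^ t \<ge> 4" using power_increasing[of 2 t "2::nat"] t by simp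
      have "card (TT ks i - {A0 i}) - 1 = 2 ^ (ks ! i) - 3" using card_TT_minus[OF A0 True] by simp
      moreover have "2 ^ (ks ! i) - 3 = (2::nat) ^ t - 3 \<longleftrightarrow> ks ! i = t"
      proof (cases "ks ! i = 1")
        case True thus ?thesis using t4 t by auto
      next
        case False
        hence "ks ! i \<ge> 2" using k by simp
        hence "(2::nat) ^ (ks ! i) \<ge> 4" using power_increasing[of 2 "ks ! i" "2::nat"] by simp
        moreover have "\<forall>a b::nat. 4 \<le> a \<longrightarrow> 4 \<le> b \<longrightarrow> (a - 3 = b - 3 \<longleftrightarrow> a = b)" by arith
        ultimately have "2 ^ (ks ! i) - 3 = (2::nat) ^ t - 3 \<longleftrightarrow> (2::nat) ^ (ks ! i) = 2 ^ t" using t4 by blast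
        also have "\<dots> \<longleftrightarrow> ks ! i = t" by (rule power_inject_exp) simp
        finally show ?thesis .
      qed
      ultimately show ?thesis using True by simp
    qed simp
  qed
  have "invar (DD ks) (part ks A0) (2 ^ t - 3) = (\<Sum>i\<in>{i \<in> {..<length ks}. ks ! i = t}. card (TT ks i - {A0 i}))"
    using invar_formula[OF A0 pos, of "2 ^ t - 3"] unfolding e .
  also have "\<dots> = (\<Sum>i\<in>{i \<in> {..<length ks}. ks ! i = t}. 2 ^ t - 2)"
    by (rule sum.cong[OF refl]) (use card_TT_minus[OF A0] in auto)
  finally show ?thesis by simp
qed

lemma count_card: "count (mset xs) t = card {i \<in> {..<length xs}. xs ! i = t}"
proof -
  have "count (mset xs) t = length (filter ((=) t) xs)" by (simp add: count_mset count_list_eq_length_filter)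
  also have "\<dots> = card {i. i < length xs \<and> t = xs ! i}" by (rule length_filter_conv_card)
  also have "{i. i < length xs \<and> t = xs ! i} = {i \<in> {..<length xs}. xs ! i = t}" by auto
  finally show ?thesis .
qed


lemma mset_eq_from_counts:
  fixes ks rs :: "nat list"
  assumes len: "length ks = length rs" and pk: "\<forall>k\<in>set ks. 0 < k" and pr: "\<forall>r\<in>set rs. 0 < r"
    and c: "\<And>t. 2 \<le> t \<Longrightarrow> count (mset ks) t = count (mset rs) t"
  shows "mset ks = mset rs"
proof -
  let ?M = "mset ks" and ?N = "mset rs"
  have c0: "count ?M 0 = 0" "count ?N 0 = 0" using pk pr by auto
  have cne: "count ?M x = count ?N x" if "x \<noteq> 1" for x
  proof (cases "x = 0")
    case True show ?thesis by (simp only: True c0)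
  next
    case False thus ?thesis using that c by simp
  qed
  have fM: "{#x \<in># ?M. x \<noteq> 1#} = {#x \<in># ?N. x \<noteq> 1#}"
    by (rule multiset_eqI) (simp add: cne)
  have sM: "size ?M = size {#x \<in># ?M. x \<noteq> 1#} + count ?M 1"
  proof -
    have "?M = {#x \<in># ?M. x \<noteq> 1#} + {#x \<in># ?M. \<not> x \<noteq> 1#}" by (rule multiset_partition)
    also have "{#x \<in># ?M. \<not> x \<noteq> 1#} = replicate_mset (count ?M 1) 1"
      using filter_eq_replicate_mset[where x=1 and D="?M"] by simp
    finally show ?thesis by (metis size_replicate_mset size_union)
  qed
  have sN: "size ?N = size {#x \<in># ?N. x \<noteq> 1#} + count ?N 1"
  proof -
    have "?N = {#x \<in># ?N. x \<noteq> 1#} + {#x \<in># ?N. \<not> x \<noteq> 1#}" by (rule multiset_partition)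
    also have "{#x \<in># ?N. \<not> x \<noteq> 1#} = replicate_mset (count ?N 1) 1"
      using filter_eq_replicate_mset[where x=1 and D="?N"] by simp
    finally show ?thesis by (metis size_replicate_mset size_union)
  qed
  have "count ?M 1 = count ?N 1" using sM sN fM len by simp
  thus ?thesis using cne by (intro multiset_eqI) (metis)
qed

theorem corollary1:
  fixes ks rs :: "nat list"
  assumes "ks \<noteq> []" and "rs \<noteq> []"
    and "\<forall>k\<in>set ks. 0 < k" and "\<forall>r\<in>set rs. 0 < r"
  shows "dev_equiv (prod_dev (map lin_dev ks)) (prod_dev (map lin_dev rs)) \<longleftrightarrow>
         (length ks = length rs \<and>
          (\<exists>\<gamma>. bij_betw \<gamma> {..<length ks} {..<length ks} \<and>
               (\<forall>i<length ks. ks ! i = rs ! \<gamma> i)))"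
proof
  assume eq: "dev_equiv (prod_dev (map lin_dev ks)) (prod_dev (map lin_dev rs))"
  note gen = generic[OF good_DD good_DD eq]
  have "(2::nat) ^ length ks = 2 ^ length rs" using gen maxc_DD[OF assms(3)] maxc_DD[OF assms(4)] by simp
  hence len: "length ks = length rs" by simp
  let ?A0 = "restrict (\<lambda>i. replicate (ks ! i) True) {..<length ks}"
  have A0: "?A0 \<in> AT ks" using AT_ne[OF assms(3)] .
  have "part ks ?A0 \<in> FF (DD ks)" using FF_DD[OF assms(3)] A0 by blast
  then obtain v' where v': "v' \<in> FF (DD rs)" "\<forall>s. invar (DD ks) (part ks ?A0) s = invar (DD rs) v' s"
    using gen by blast
  then obtain B0 where B0: "B0 \<in> AT rs" "v' = part rs B0" using FF_DD[OF assms(4)] by blast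
  have c: "count (mset ks) t = count (mset rs) t" if t: "2 \<le> t" for t
  proof -
    have e1: "invar (DD ks) (part ks ?A0) (2 ^ t - 3) = invar (DD rs) (part rs B0) (2 ^ t - 3)"
      using v'(2) B0(2) by simp
    have eqm: "card {i \<in> {..<length ks}. ks ! i = t} * (2 ^ t - 2) = card {i \<in> {..<length rs}. rs ! i = t} * (2 ^ t - 2)"
      using e1 count_t[OF assms(3) A0 t] count_t[OF assms(4) B0(1) t] by linarith
    have pos2: "(2::nat) ^ t - 2 > 0"
    proof -
      have "(2::nat) ^ t \<ge> 4" using power_increasing[of 2 t "2::nat"] t by simp
      thus ?thesis by simp
    qed
    have "card {i \<in> {..<length ks}. ks ! i = t} = card {i \<in> {..<length rs}. rs ! i = t}"
      using eqm pos2 by simp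
    thus ?thesis unfolding count_card .
  qed
  have "mset ks = mset rs" using mset_eq_from_counts[OF len assms(3,4) c] .
  then obtain f where f: "bij_betw f {..<length ks} {..<length rs}" "\<forall>i<length ks. ks ! i = rs ! f i"
    using permutation_Ex_bij by blast
  thus "length ks = length rs \<and> (\<exists>\<gamma>. bij_betw \<gamma> {..<length ks} {..<length ks} \<and> (\<forall>i<length ks. ks ! i = rs ! \<gamma> i))"
    using len by auto
next
  assume "length ks = length rs \<and> (\<exists>\<gamma>. bij_betw \<gamma> {..<length ks} {..<length ks} \<and> (\<forall>i<length ks. ks ! i = rs ! \<gamma> i))"
  then obtain \<gamma> where len: "length ks = length rs" and g: "bij_betw \<gamma> {..<length ks} {..<length ks}"
    and e: "\<forall>i<length ks. ks ! i = rs ! \<gamma> i" by blast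
  let ?d = "inv_into {..<length ks} \<gamma>"
  have d: "bij_betw ?d {..<length ks} {..<length ks}" using bij_betw_inv_into[OF g] .
  have de: "\<forall>j<length ks. rs ! j = ks ! (?d j)"
  proof (intro allI impI)
    fix j assume j: "j < length ks"
    have "?d j < length ks" using d j unfolding bij_betw_def by auto
    moreover have "\<gamma> (?d j) = j" using g j by (simp add: bij_betw_inv_into_right)
    ultimately show "rs ! j = ks ! (?d j)" using e by metis
  qed
  have le1: "dev_le (DD ks) (DD rs)" using perm_le[OF len[symmetric] d de] .
  have le2: "dev_le (DD rs) (DD ks)" using perm_le[of ks rs \<gamma>] len g e by simp
  show "dev_equiv (prod_dev (map lin_dev ks)) (prod_dev (map lin_dev rs))"
    unfolding dev_equiv_def using le1 le2 by blast
qed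


end
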